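(* Let $\Pi=(\mathcal{S},\mathcal{R})$ be a stably (resp. haltingly) correct CRN protocol (with respect to some interface). Then there exist a runtime policy $\varrho$ and a function $f:\mathbb{Z}_{\ge1}\to\mathbb{R}_{\ge0}$ such that for every integer $n\ge1$, every execution $\eta\in\mathcal{F}(n)$ and every skipping policy $\sigma$, the stabilization runtime $\operatorname{RT}_{\mathrm{stab}}^{\varrho,\sigma}(\eta)$ (resp. halting runtime $\operatorname{RT}_{\mathrm{halt}}^{\varrho,\sigma}(\eta)$) is at most $f(n)$.
   Context: Model. A CRN protocol $\Pi=(\mathcal{S},\mathcal{R})$ has a finite species set $\mathcal{S}$ and finite reaction set $\mathcal{R}\subset\mathbb{N}^{\mathcal{S}}\times\mathbb{N}^{\mathcal{S}}$; each reaction $(\mathbf{r},\mathbf{p})$ has $\|\mathbf{r}\|_1\in\{1,2\}$ and $\|\mathbf{r}\|_1\le\|\mathbf{p}\|_1$; for each $\mathbf{r}$ with $1\le\|\mathbf{r}\|_1\le2$ the set $\mathcal{R}(\mathbf{r})$ of reactions with reactants $\mathbf{r}$ is nonempty; void reactions have $\mathbf{r}=\mathbf{p}$, and if $(\mathbf{r},\mathbf{r})\in\mathcal{R}$ then $\mathcal{R}(\mathbf{r})=\{(\mathbf{r},\mathbf{r})\}$; $\operatorname{NV}(\mathcal{R})$ = non-void reactions. Configurations $\mathbf{c}\in\mathbb{N}^{\mathcal{S}}$ with $\|\mathbf{c}\|_1\ge1$; $(\mathbf{r},\mathbf{p})$ is applicable to $\mathbf{c}$ if $\mathbf{r}\le\mathbf{c}$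 and yields $\mathbf{c}-\mathbf{r}+\mathbf{p}$; $\operatorname{app}(\mathbf{c})$ applicable reactions, $\overline{\operatorname{app}}(\mathbf{c})=\mathcal{R}\setminus\operatorname{app}(\mathbf{c})$; $\stackrel{*}{\rightharpoonup}$ reachability; the protocol respects finite density ($\mathbf{c}\stackrel{*}{\rightharpoonup}\mathbf{c}'\Rightarrow\|\mathbf{c}'\|_1\le O(\|\mathbf{c}\|_1)$). $\mathrm{stab}(Z)=\{\mathbf{c}\in Z:\mathbf{c}\stackrel{*}{\rightharpoonup}\mathbf{c}'\Rightarrow\mathbf{c}'\in Z\}$, $\mathrm{halt}(Z)=\{\mathbf{c}\in Z:\mathbf{c}\stackrel{*}{\rightharpoonup}\mathbf{c}'\Rightarrow\mathbf{c}'=\mathbf{c}\}$. Executions $\eta=\langle\mathbf{c}^t,\alpha^t\rangle_{t\ge0}$ ($\alpha^t\in\operatorname{app}(\mathbf{c}^t)$, $\mathbf{c}^{t+1}=\alpha^t(\mathbf{c}^t)$) are weakly fair if for all $t$ and $\alpha\in\operatorname{app}(\mathbf{c}^t)$ there is $t'\ge t$ with $\alpha^{t'}=\alpha$ or $\alpha\notin\operatorname{app}(\mathbf{c}^{t'})$. An interface $\mathcal{I}=(\mathcal{U},\mu,\mathcal{C})$ ($\mu:\mathcal{S}\to\mathcal{U}$, $\mathcal{C}\subseteq\mathbb{N}^{\mathcal{U}}\times\mathbb{N}^{\mathcal{U}}$, $\mu(\mathbf{c})(u)=\sum_{\mu(A)=u}\mathbf{c}(A)$) gives $Z_{\mathcal{I}}(\mathbf{c}^0)=\{\mathbf{c}:(\mu(\mathbf{c}^0),\mu(\mathbf{c}))\in\mathcal{C}\}$;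 $\mathbf{c}^0$ is valid if this is nonempty; $\Pi$ is stably (haltingly) correct if every weakly fair execution from a valid $\mathbf{c}^0$ reaches $\mathrm{stab}(Z_{\mathcal{I}}(\mathbf{c}^0))$ ($\mathrm{halt}(Z_{\mathcal{I}}(\mathbf{c}^0))$); the first such step is the stabilization (halting) step. Stochastic scheduler. With volume $\varphi>0$, the propensity of $\alpha=(\mathbf{r},\mathbf{p})$ in $\mathbf{c}$ is $\pi_{\mathbf{c}}(\alpha)=\mathbf{c}(A)/|\mathcal{R}(\mathbf{r})|$ if $\mathbf{r}=A$; $\frac1\varphi\binom{\mathbf{c}(A)}{2}/|\mathcal{R}(\mathbf{r})|$ if $\mathbf{r}=2A$; $\frac1\varphi\mathbf{c}(A)\mathbf{c}(B)/|\mathcal{R}(\mathbf{r})|$ if $\mathbf{r}=A+B$, $A\ne B$; $\pi_{\mathbf{c}}(Q)=\sum_{\alpha\in Q}\pi_{\mathbf{c}}(\alpha)$, $\pi_{\mathbf{c}}=\pi_{\mathbf{c}}(\mathcal{R})$. A stochastic execution picks $\alpha^t$ with probability $\pi_{\mathbf{c}^t}(\alpha)/\pi_{\mathbf{c}^t}$; step $t$ has time span $1/\pi_{\mathbf{c}^t}$. The volume is $\varphi=\Theta(n)$ with $n$ the initial molecular count. Runtime. For an execution $\eta$, step $t$ and $Q\subseteq\mathcal{R}$, $\tau(\eta,t,Q)$ is the least $s>t$ with $\alpha^{s-1}\in Q$ or $Q\subseteq\bigcup_{t\le t'\le s}\overline{\operatorname{app}}(\mathbf{c}^{t'})$. A runtime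 policy $\varrho$ maps each configuration $\mathbf{c}$ to $\varrho(\mathbf{c})\subseteq\operatorname{NV}(\mathcal{R})$; a skipping policy $\sigma$ maps each step $t$ to $\sigma(t)\ge t$. Rounds of a weakly fair $\eta$: $t(0)=0$, effective step $t_e(i)=\sigma(t(i))$, effective configuration $\mathbf{e}^i=\mathbf{c}^{t_e(i)}$, $t(i+1)=\tau(\eta,t_e(i),\varrho(\mathbf{e}^i))$. Temporal cost: $\operatorname{TC}^{\varrho}(\mathbf{c})=\mathbb{E}\big[\sum_{t=0}^{\tau(\eta_r,0,\varrho(\mathbf{c}))-1}1/\pi_{\mathbf{c}_r^t}\big]$ for a stochastic execution $\eta_r=\langle\mathbf{c}_r^t,\alpha_r^t\rangle$ from $\mathbf{c}$. The runtime of the prefix of $\eta$ before step $t^*$ is $\sum_{i=0}^{i^*-1}\operatorname{TC}^{\varrho}(\mathbf{e}^i)$ with $i^*=\min\{i:t(i)\ge t^*\}$; $\operatorname{RT}_{\mathrm{stab}}^{\varrho,\sigma}(\eta)$ (resp. $\operatorname{RT}_{\mathrm{halt}}^{\varrho,\sigma}(\eta)$) is this with $t^*$ the stabilization (halting) step. $\mathcal{F}(n)$ is the set of weakly fair executions from valid initial configurations of molecular count $n$. *)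

theory Defs
  imports "HOL-Analysis.Analysis"
begin

type_synonym 's config = "'s \<Rightarrow> nat"
type_synonym 's reaction = "'s config \<times> 's config"

definition csize :: "'s::finite config \<Rightarrow> nat" where
  "csize c = (\<Sum>A\<in>UNIV. c A)"

definition Rr :: "'s reaction set \<Rightarrow> 's config \<Rightarrow> 's reaction set" where
  "Rr R r = {\<alpha>\<in>R. fst \<alpha> = r}"

definition NV :: "'s reaction set \<Rightarrow> 's reaction set" where
  "NV R = {\<alpha>\<in>R. fst \<alpha> \<noteq> snd \<alpha>}"

definition app :: "'s reaction set \<Rightarrow> 's config \<Rightarrow> 's reaction set" where
  "app R c = {\<alpha>\<in>R. fst \<alpha> \<le> c}"

definition nonapp :: "'s reaction set \<Rightarrow> 's config \<Rightarrow> 's reaction set" where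
  "nonapp R c = R - app R c"

text \<open>Result of applying (r,p) to c (meaningful when r \<le> c): c - r + p.\<close>
definition apply_r :: "'s reaction \<Rightarrow> 's config \<Rightarrow> 's config" where
  "apply_r \<alpha> c = (\<lambda>A. c A - fst \<alpha> A + snd \<alpha> A)"

definition step :: "'s reaction set \<Rightarrow> 's config \<Rightarrow> 's config \<Rightarrow> bool" where
  "step R c c' \<longleftrightarrow> (\<exists>\<alpha>\<in>app R c. c' = apply_r \<alpha> c)"

definition reach :: "'s reaction set \<Rightarrow> 's config \<Rightarrow> 's config \<Rightarrow> bool" where
  "reach R = (step R)\<^sup>*\<^sup>*"

definition crn :: "'s::finite reaction set \<Rightarrow> bool" where
  "crn R \<longleftrightarrow>
     finite R \<and>
     (\<forall>(r,p)\<in>R. (csize r = 1 \<or> csize r = 2) \<and> csize r \<le> csize p) \<and>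
     (\<forall>r. 1 \<le> csize r \<and> csize r \<le> 2 \<longrightarrow> Rr R r \<noteq> {}) \<and>
     (\<forall>r. (r,r) \<in> R \<longrightarrow> Rr R r = {(r,r)}) \<and>
     (\<exists>K::nat. \<forall>c c'. 1 \<le> csize c \<longrightarrow> reach R c c' \<longrightarrow> csize c' \<le> K * csize c)"

definition cmap :: "('s::finite \<Rightarrow> 'u) \<Rightarrow> 's config \<Rightarrow> 'u config" where
  "cmap \<mu> c = (\<lambda>u. \<Sum>A\<in>{A. \<mu> A = u}. c A)"

definition Zset :: "('s::finite \<Rightarrow> 'u) \<Rightarrow> ('u config \<times> 'u config) set \<Rightarrow> 's config \<Rightarrow> 's config set" where
  "Zset \<mu> C c0 = {c. 1 \<le> csize c \<and> (cmap \<mu> c0, cmap \<mu> c) \<in> C}"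

definition valid :: "('s::finite \<Rightarrow> 'u) \<Rightarrow> ('u config \<times> 'u config) set \<Rightarrow> 's config \<Rightarrow> bool" where
  "valid \<mu> C c0 \<longleftrightarrow> 1 \<le> csize c0 \<and> Zset \<mu> C c0 \<noteq> {}"

definition stab :: "'s reaction set \<Rightarrow> 's config set \<Rightarrow> 's config set" where
  "stab R Z = {c\<in>Z. \<forall>c'. reach R c c' \<longrightarrow> c' \<in> Z}"

definition halt :: "'s reaction set \<Rightarrow> 's config set \<Rightarrow> 's config set" where
  "halt R Z = {c\<in>Z. \<forall>c'. reach R c c' \<longrightarrow> c' = c}"

definition execution :: "'s reaction set \<Rightarrow> (nat \<Rightarrow> 's config) \<Rightarrow> (nat \<Rightarrow> 's reaction) \<Rightarrow> bool" where
  "execution R c \<alpha> \<longleftrightarrow> (\<forall>t. \<alpha> t \<in> app R (c t) \<and> c (Suc t) = apply_r (\<alpha> t) (c t))"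

definition weakly_fair :: "'s reaction set \<Rightarrow> (nat \<Rightarrow> 's config) \<Rightarrow> (nat \<Rightarrow> 's reaction) \<Rightarrow> bool" where
  "weakly_fair R c \<alpha> \<longleftrightarrow>
     (\<forall>t. \<forall>\<beta>\<in>app R (c t). \<exists>t'\<ge>t. \<alpha> t' = \<beta> \<or> \<beta> \<notin> app R (c t'))"

definition stably_correct :: "'s::finite reaction set \<Rightarrow> ('s \<Rightarrow> 'u) \<Rightarrow> ('u config \<times> 'u config) set \<Rightarrow> bool" where
  "stably_correct R \<mu> C \<longleftrightarrow>
     (\<forall>c \<alpha>. valid \<mu> C (c 0) \<and> execution R c \<alpha> \<and> weakly_fair R c \<alpha> \<longrightarrow>
        (\<exists>t. c t \<in> stab R (Zset \<mu> C (c 0))))"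

definition haltingly_correct :: "'s::finite reaction set \<Rightarrow> ('s \<Rightarrow> 'u) \<Rightarrow> ('u config \<times> 'u config) set \<Rightarrow> bool" where
  "haltingly_correct R \<mu> C \<longleftrightarrow>
     (\<forall>c \<alpha>. valid \<mu> C (c 0) \<and> execution R c \<alpha> \<and> weakly_fair R c \<alpha> \<longrightarrow>
        (\<exists>t. c t \<in> halt R (Zset \<mu> C (c 0))))"

definition stab_step :: "'s::finite reaction set \<Rightarrow> ('s \<Rightarrow> 'u) \<Rightarrow> ('u config \<times> 'u config) set \<Rightarrow> (nat \<Rightarrow> 's config) \<Rightarrow> nat" where
  "stab_step R \<mu> C c = (LEAST t. c t \<in> stab R (Zset \<mu> C (c 0)))"

definition halt_step :: "'s::finite reaction set \<Rightarrow> ('s \<Rightarrow> 'u) \<Rightarrow> ('u config \<times> 'u config) set \<Rightarrow> (nat \<Rightarrow> 's config) \<Rightarrow> nat" where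
  "halt_step R \<mu> C c = (LEAST t. c t \<in> halt R (Zset \<mu> C (c 0)))"

definition Fset :: "'s::finite reaction set \<Rightarrow> ('s \<Rightarrow> 'u) \<Rightarrow> ('u config \<times> 'u config) set \<Rightarrow> nat
      \<Rightarrow> ((nat \<Rightarrow> 's config) \<times> (nat \<Rightarrow> 's reaction)) set" where
  "Fset R \<mu> C n = {(c,\<alpha>). execution R c \<alpha> \<and> weakly_fair R c \<alpha> \<and> valid \<mu> C (c 0) \<and> csize (c 0) = n}"

definition propensity :: "real \<Rightarrow> 's::finite reaction set \<Rightarrow> 's config \<Rightarrow> 's reaction \<Rightarrow> real" where
  "propensity \<phi> R c \<alpha> =
     (let r = fst \<alpha>; k = real (card (Rr R r)) in
      if csize r = 1 then real (c (THE A. r A = 1)) / k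
      else if csize r = 2 \<and> (\<exists>A. r A = 2) then
        (1 / \<phi>) * real (c (THE A. r A = 2) choose 2) / k
      else if csize r = 2 then
        (1 / \<phi>) * (\<Prod>A\<in>{A. r A = 1}. real (c A)) / k
      else 0)"

definition tot_propensity :: "real \<Rightarrow> 's::finite reaction set \<Rightarrow> 's config \<Rightarrow> real" where
  "tot_propensity \<phi> R c = (\<Sum>\<alpha>\<in>R. propensity \<phi> R c \<alpha>)"

definition tau :: "'s reaction set \<Rightarrow> (nat \<Rightarrow> 's config) \<Rightarrow> (nat \<Rightarrow> 's reaction) \<Rightarrow> nat
      \<Rightarrow> 's reaction set \<Rightarrow> nat" where
  "tau R c \<alpha> t Q = (LEAST s. t < s \<and> (\<alpha> (s - 1) \<in> Q \<or> Q \<subseteq> (\<Union>t'\<in>{t..s}. nonapp R (c t'))))"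

text \<open>Finite prefixes of a stochastic execution from c0 are described by their list of
reactions; the configuration after the first i steps is cfg_at c0 as i.\<close>
definition cfg_at :: "'s config \<Rightarrow> 's reaction list \<Rightarrow> nat \<Rightarrow> 's config" where
  "cfg_at c0 as i = fold apply_r (take i as) c0"

definition path_prob :: "real \<Rightarrow> 's::finite reaction set \<Rightarrow> 's config \<Rightarrow> 's reaction list \<Rightarrow> real" where
  "path_prob \<phi> R c0 as =
     (\<Prod>i<length as. propensity \<phi> R (cfg_at c0 as i) (as ! i) / tot_propensity \<phi> R (cfg_at c0 as i))"

text \<open>The event tau(eta_r, 0, Q) > t, which is determined by the first t steps.\<close>
definition not_stopped :: "'s reaction set \<Rightarrow> 's reaction set \<Rightarrow> 's config \<Rightarrow> 's reaction list \<Rightarrow> nat \<Rightarrow> bool" where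
  "not_stopped R Q c0 as t \<longleftrightarrow>
     (\<forall>s. 0 < s \<and> s \<le> t \<longrightarrow>
        \<not> (as ! (s - 1) \<in> Q \<or> Q \<subseteq> (\<Union>t'\<in>{0..s}. nonapp R (cfg_at c0 as t'))))"

text \<open>Temporal cost TC(c0) = E[ sum_{t < tau(eta_r,0,Q)} 1/pi_{c_r^t} ] with Q = rho(c0),
  written out (Tonelli) as sum over t of E[1{tau > t} / pi_{c_r^t}], the expectation
  being the sum over all length-t reaction prefixes weighted by their probability.\<close>
definition TC :: "real \<Rightarrow> 's::finite reaction set \<Rightarrow> 's reaction set \<Rightarrow> 's config \<Rightarrow> ennreal" where
  "TC \<phi> R Q c0 =
     (\<Sum>t. \<Sum>as\<in>{as. set as \<subseteq> R \<and> length as = t}.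
        (if not_stopped R Q c0 as t
         then ennreal (path_prob \<phi> R c0 as) * ennreal (1 / tot_propensity \<phi> R (cfg_at c0 as t))
         else 0))"

definition runtime_policy :: "'s reaction set \<Rightarrow> ('s config \<Rightarrow> 's reaction set) \<Rightarrow> bool" where
  "runtime_policy R \<rho> \<longleftrightarrow> (\<forall>c. \<rho> c \<subseteq> NV R)"

definition skipping_policy :: "(nat \<Rightarrow> nat) \<Rightarrow> bool" where
  "skipping_policy \<sigma> \<longleftrightarrow> (\<forall>t. t \<le> \<sigma> t)"

primrec round_start :: "'s reaction set \<Rightarrow> (nat \<Rightarrow> 's config) \<Rightarrow> (nat \<Rightarrow> 's reaction)
     \<Rightarrow> ('s config \<Rightarrow> 's reaction set) \<Rightarrow> (nat \<Rightarrow> nat) \<Rightarrow> nat \<Rightarrow> nat" where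
  "round_start R c \<alpha> \<rho> \<sigma> 0 = 0"
| "round_start R c \<alpha> \<rho> \<sigma> (Suc i) =
     tau R c \<alpha> (\<sigma> (round_start R c \<alpha> \<rho> \<sigma> i)) (\<rho> (c (\<sigma> (round_start R c \<alpha> \<rho> \<sigma> i))))"

definition eff_config :: "'s reaction set \<Rightarrow> (nat \<Rightarrow> 's config) \<Rightarrow> (nat \<Rightarrow> 's reaction)
     \<Rightarrow> ('s config \<Rightarrow> 's reaction set) \<Rightarrow> (nat \<Rightarrow> nat) \<Rightarrow> nat \<Rightarrow> 's config" where
  "eff_config R c \<alpha> \<rho> \<sigma> i = c (\<sigma> (round_start R c \<alpha> \<rho> \<sigma> i))"

definition prefix_runtime :: "real \<Rightarrow> 's::finite reaction set \<Rightarrow> (nat \<Rightarrow> 's config) \<Rightarrow> (nat \<Rightarrow> 's reaction)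
     \<Rightarrow> ('s config \<Rightarrow> 's reaction set) \<Rightarrow> (nat \<Rightarrow> nat) \<Rightarrow> nat \<Rightarrow> ennreal" where
  "prefix_runtime \<phi> R c \<alpha> \<rho> \<sigma> tstar =
     (\<Sum>i < (LEAST i. tstar \<le> round_start R c \<alpha> \<rho> \<sigma> i).
        TC \<phi> R (\<rho> (eff_config R c \<alpha> \<rho> \<sigma> i)) (eff_config R c \<alpha> \<rho> \<sigma> i))"

definition RT_stab :: "real \<Rightarrow> 's::finite reaction set \<Rightarrow> ('s \<Rightarrow> 'u) \<Rightarrow> ('u config \<times> 'u config) set
     \<Rightarrow> (nat \<Rightarrow> 's config) \<Rightarrow> (nat \<Rightarrow> 's reaction) \<Rightarrow> ('s config \<Rightarrow> 's reaction set) \<Rightarrow> (nat \<Rightarrow> nat) \<Rightarrow> ennreal" where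
  "RT_stab \<phi> R \<mu> C c \<alpha> \<rho> \<sigma> = prefix_runtime \<phi> R c \<alpha> \<rho> \<sigma> (stab_step R \<mu> C c)"

definition RT_halt :: "real \<Rightarrow> 's::finite reaction set \<Rightarrow> ('s \<Rightarrow> 'u) \<Rightarrow> ('u config \<times> 'u config) set
     \<Rightarrow> (nat \<Rightarrow> 's config) \<Rightarrow> (nat \<Rightarrow> 's reaction) \<Rightarrow> ('s config \<Rightarrow> 's reaction set) \<Rightarrow> (nat \<Rightarrow> nat) \<Rightarrow> ennreal" where
  "RT_halt \<phi> R \<mu> C c \<alpha> \<rho> \<sigma> = prefix_runtime \<phi> R c \<alpha> \<rho> \<sigma> (halt_step R \<mu> C c)"

end

theory Submission
  imports Defs
begin

lemma csize_ge_member: "r A \<le> csize (r::'s::finite config)"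
  unfolding csize_def by (rule member_le_sum) auto

lemma csize_ge_two: "A \<noteq> B \<Longrightarrow> r A + r B \<le> csize (r::'s::finite config)"
proof -
  assume "A \<noteq> B"
  have "r A + r B = (\<Sum>X\<in>{A,B}. r X)" using \<open>A \<noteq> B\<close> by simp
  also have "\<dots> \<le> (\<Sum>X\<in>UNIV. r X)" by (rule sum_mono2) auto
  finally show ?thesis unfolding csize_def .
qed

lemma csize_pos: "0 < csize (r::'s::finite config) \<Longrightarrow> \<exists>A. 0 < r A"
proof (rule ccontr)
  assume "0 < csize r" "\<not> (\<exists>A. 0 < r A)"
  hence "\<forall>A. r A = 0" by auto
  hence "csize r = 0" unfolding csize_def by simp
  with \<open>0 < csize r\<close> show False by simp
qed

lemma crn_finite: "crn R \<Longrightarrow> finite R" unfolding crn_def by (elim conjE) assumption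

lemma crn_size: "crn R \<Longrightarrow> (r,p) \<in> R \<Longrightarrow> (csize r = 1 \<or> csize r = 2) \<and> csize r \<le> csize p"
proof -
  assume a: "crn R" "(r,p) \<in> R"
  from a(1) have "\<forall>(r,p)\<in>R. (csize r = 1 \<or> csize r = 2) \<and> csize r \<le> csize p"
    unfolding crn_def by (elim conjE) assumption
  from bspec[OF this a(2)] show ?thesis by simp
qed

lemma crn_Rr: "crn R \<Longrightarrow> 1 \<le> csize r \<Longrightarrow> csize r \<le> 2 \<Longrightarrow> Rr R r \<noteq> {}"
proof -
  assume a: "crn R" "1 \<le> csize r" "csize r \<le> 2"
  from a(1) have "\<forall>r. 1 \<le> csize r \<and> csize r \<le> 2 \<longrightarrow> Rr R r \<noteq> {}"
    unfolding crn_def by (elim conjE) assumption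
  thus ?thesis using a(2,3) by simp
qed

lemma crn_void: "crn R \<Longrightarrow> (r,r) \<in> R \<Longrightarrow> Rr R r = {(r,r)}"
proof -
  assume a: "crn R" "(r,r) \<in> R"
  from a(1) have "\<forall>r. (r,r) \<in> R \<longrightarrow> Rr R r = {(r,r)}"
    unfolding crn_def by (elim conjE) assumption
  thus ?thesis using a(2) by simp
qed

lemma crn_density: "crn R \<Longrightarrow> \<exists>K::nat. \<forall>c c'. 1 \<le> csize c \<longrightarrow> reach R c c' \<longrightarrow> csize c' \<le> K * csize c"
  unfolding crn_def by (elim conjE) assumption

lemma csize_ind: "csize (\<lambda>B. if B = A then 1 else 0 :: nat) = 1"
  unfolding csize_def by simp

lemma crn_uni: assumes "crn R" "0 < x A"
  shows "\<exists>\<beta>\<in>R. fst \<beta> = (\<lambda>B. if B = A then 1 else 0) \<and> fst \<beta> \<le> x"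
proof -
  let ?r = "(\<lambda>B. if B = A then 1 else 0 :: nat)"
  have "Rr R ?r \<noteq> {}" using crn_Rr[OF assms(1), of ?r] csize_ind[of A] by simp
  then obtain \<beta> where "\<beta> \<in> R" "fst \<beta> = ?r" unfolding Rr_def by auto
  moreover have "?r \<le> x" using assms(2) by (auto simp: le_fun_def)
  ultimately show ?thesis by auto
qed

lemma crn_card_pos: fixes R :: "'s::finite reaction set" assumes "crn R" shows "0 < card R"
proof -
  obtain A :: 's where True by simp
  have "0 < (\<lambda>B. 1 :: nat) A" by simp
  from crn_uni[of R "\<lambda>B. 1" A, OF assms this] obtain \<beta> where "\<beta> \<in> R" by auto
  thus ?thesis using crn_finite[OF assms] card_gt_0_iff by blast
qed

lemma prop_nonneg: "0 < \<phi> \<Longrightarrow> 0 \<le> propensity \<phi> R x \<beta>"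
  unfolding propensity_def Let_def by (auto intro!: prod_nonneg divide_nonneg_nonneg)

lemma tot_nonneg: "0 < \<phi> \<Longrightarrow> 0 \<le> tot_propensity \<phi> R x"
  unfolding tot_propensity_def by (auto intro!: sum_nonneg prop_nonneg)

lemma prop_c1: "csize (fst \<beta>) = 1 \<Longrightarrow> propensity \<phi> R x \<beta> = real (x (THE A. fst \<beta> A = 1)) / real (card (Rr R (fst \<beta>)))"
  unfolding propensity_def Let_def by simp
lemma prop_c2: "csize (fst \<beta>) = 2 \<Longrightarrow> \<exists>A. fst \<beta> A = 2 \<Longrightarrow> propensity \<phi> R x \<beta> = (1/\<phi>) * real (x (THE A. fst \<beta> A = 2) choose 2) / real (card (Rr R (fst \<beta>)))"
  unfolding propensity_def Let_def by simp
lemma prop_c3: "csize (fst \<beta>) = 2 \<Longrightarrow> \<not> (\<exists>A. fst \<beta> A = 2) \<Longrightarrow> propensity \<phi> R x \<beta> = (1/\<phi>) * (\<Prod>A\<in>{A. fst \<beta> A = 1}. real (x A)) / real (card (Rr R (fst \<beta>)))"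
  unfolding propensity_def Let_def by simp

definition plow :: "real \<Rightarrow> 's reaction set \<Rightarrow> real" where
  "plow \<phi> R = min 1 (1/\<phi>) / real (card R)"

lemma plow_pos: "crn R \<Longrightarrow> 0 < \<phi> \<Longrightarrow> 0 < plow \<phi> R"
proof -
  assume a: "crn R" "0 < \<phi>"
  have "0 < min 1 (1/\<phi>)" using a(2) by simp
  moreover have "0 < real (card R)" using crn_card_pos[OF a(1)] by simp
  ultimately show ?thesis unfolding plow_def by (rule divide_pos_pos)
qed

lemma unique1: assumes "csize r = 1" shows "\<exists>!A. r A = (1::nat)"
proof -
  have "0 < csize r" using assms by simp
  then obtain A where "0 < r A" using csize_pos by blast
  moreover have "r A \<le> 1" using csize_ge_member[of r A] assms by simp
  ultimately have "r A = 1" by simp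
  moreover have "B = A" if "r B = 1" for B
  proof (rule ccontr)
    assume "B \<noteq> A"
    hence "r B + r A \<le> csize r" by (rule csize_ge_two)
    with that \<open>r A = 1\<close> assms show False by simp
  qed
  ultimately show ?thesis by blast
qed

lemma unique2: assumes "csize r = 2" "r A = (2::nat)" shows "\<exists>!A. r A = (2::nat)"
proof -
  have "B = A" if "r B = 2" for B
  proof (rule ccontr)
    assume "B \<noteq> A"
    hence "r B + r A \<le> csize r" by (rule csize_ge_two)
    with that assms show False by simp
  qed
  thus ?thesis using assms by blast
qed

lemma prop_lower:
  assumes "crn R" "0 < \<phi>" "\<beta> \<in> R" "fst \<beta> \<le> x"
  shows "plow \<phi> R \<le> propensity \<phi> R x \<beta>"
proof -
  define r where "r = fst \<beta>"
  have fin: "finite R" using crn_finite[OF assms(1)] .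
  have sz: "csize r = 1 \<or> csize r = 2" using crn_size[OF assms(1), of "fst \<beta>" "snd \<beta>"] assms(3) r_def by simp
  define k where "k = real (card (Rr R r))"
  have "\<beta> \<in> Rr R r" using assms(3) r_def unfolding Rr_def by auto
  moreover have "finite (Rr R r)" using fin unfolding Rr_def by simp
  ultimately have "0 < card (Rr R r)" by (auto simp: card_gt_0_iff)
  hence k1: "1 \<le> k" unfolding k_def by simp
  have kR: "k \<le> real (card R)" unfolding k_def
    by (simp only: of_nat_le_iff) (rule card_mono[OF fin], auto simp: Rr_def)
  have rx: "r \<le> x" using assms(4) r_def by simp
  have pl1: "plow \<phi> R \<le> 1 / k" unfolding plow_def
  proof -
    have "min 1 (1/\<phi>) / real (card R) \<le> 1 / real (card R)" by (rule divide_right_mono) auto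
    also have "\<dots> \<le> 1 / k" by (rule frac_le) (use k1 kR in auto)
    finally show "min 1 (1/\<phi>) / real (card R) \<le> 1 / k" .
  qed
  have pl2: "plow \<phi> R \<le> (1/\<phi>) / k" unfolding plow_def
  proof -
    have "min 1 (1/\<phi>) / real (card R) \<le> (1/\<phi>) / real (card R)" by (rule divide_right_mono) auto
    also have "\<dots> \<le> (1/\<phi>) / k" by (rule frac_le) (use k1 kR assms(2) in auto)
    finally show "min 1 (1/\<phi>) / real (card R) \<le> (1/\<phi>) / k" .
  qed
  show ?thesis
  proof (cases "csize r = 1")
    case True
    let ?A = "THE A. r A = 1"
    have "r ?A = 1" using theI'[OF unique1[OF True]] .
    hence "1 \<le> x ?A" using le_funD[OF rx, of ?A] by simp
    hence "1 / k \<le> real (x ?A) / k" using k1 by (intro divide_right_mono) auto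
    moreover have "propensity \<phi> R x \<beta> = real (x ?A) / k"
      using prop_c1[of \<beta> \<phi> R x] True unfolding r_def k_def by simp
    ultimately show ?thesis using pl1 by simp
  next
    case False
    hence s2: "csize r = 2" using sz by simp
    show ?thesis
    proof (cases "\<exists>A. r A = 2")
      case True
      then obtain A0 where "r A0 = 2" by blast
      let ?A = "THE A. r A = 2"
      have "r ?A = 2" using theI'[OF unique2[OF s2 \<open>r A0 = 2\<close>]] .
      hence "2 \<le> x ?A" using le_funD[OF rx, of ?A] by simp
      hence "0 < x ?A choose 2" by (rule zero_less_binomial)
      hence "1 \<le> x ?A choose 2" by linarith
      hence c1: "(1::real) \<le> real (x ?A choose 2)" by simp
      have "1/\<phi> \<le> (1/\<phi>) * real (x ?A choose 2)" using mult_left_mono[OF c1, of "1/\<phi>"] assms(2) by simp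
      hence "(1/\<phi>) / k \<le> (1/\<phi>) * real (x ?A choose 2) / k" using k1
        by (intro divide_right_mono) auto
      moreover have "propensity \<phi> R x \<beta> = (1/\<phi>) * real (x ?A choose 2) / k"
        using prop_c2[of \<beta> \<phi> R x] True s2 unfolding r_def k_def by simp
      ultimately show ?thesis using pl2 by simp
    next
      case F2: False
      have rx1: "\<And>A. r A = 1 \<Longrightarrow> 1 \<le> x A" 
      proof -
        fix A assume "r A = 1" with le_funD[OF rx, of A] show "1 \<le> x A" by simp
      qed
      have "1 \<le> (\<Prod>A\<in>{A. r A = 1}. real (x A))"
        by (rule prod_ge_1) (use rx1 in auto)
      hence c1: "(1::real) \<le> (\<Prod>A\<in>{A. r A = 1}. real (x A))" by simp
      have "1/\<phi> \<le> (1/\<phi>) * (\<Prod>A\<in>{A. r A = 1}. real (x A))" using mult_left_mono[OF c1, of "1/\<phi>"] assms(2) by simp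
      hence "(1/\<phi>) / k \<le> (1/\<phi>) * (\<Prod>A\<in>{A. r A = 1}. real (x A)) / k" using k1
        by (intro divide_right_mono) auto
      moreover have "propensity \<phi> R x \<beta> = (1/\<phi>) * (\<Prod>A\<in>{A. r A = 1}. real (x A)) / k"
        using prop_c3[of \<beta> \<phi> R x] F2 s2 unfolding r_def k_def by simp
      ultimately show ?thesis using pl2 by simp
    qed
  qed
qed

lemma tot_lower:
  assumes "crn R" "0 < \<phi>" "0 < x A"
  shows "plow \<phi> R \<le> tot_propensity \<phi> R x"
proof -
  obtain \<beta> where b: "\<beta> \<in> R" "fst \<beta> \<le> x" using crn_uni[of R x A, OF assms(1,3)] by blast
  have "plow \<phi> R \<le> propensity \<phi> R x \<beta>" using prop_lower[OF assms(1,2) b] .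
  also have "\<dots> \<le> tot_propensity \<phi> R x" unfolding tot_propensity_def
    using b crn_finite[OF assms(1)] prop_nonneg[OF assms(2)] by (intro member_le_sum) auto
  finally show ?thesis .
qed

definition RLs :: "'s reaction set \<Rightarrow> nat \<Rightarrow> 's reaction list set" where
  "RLs R t = {as. set as \<subseteq> R \<and> length as = t}"

lemma RLs_finite: "finite R \<Longrightarrow> finite (RLs R t)"
  unfolding RLs_def by (rule finite_lists_length_eq)

lemma RLs_0: "RLs R 0 = {[]}" unfolding RLs_def by auto

lemma RLs_Suc: "RLs R (Suc t) = (\<lambda>(as,\<beta>). as @ [\<beta>]) ` (RLs R t \<times> R)"
proof
  show "RLs R (Suc t) \<subseteq> (\<lambda>(as,\<beta>). as @ [\<beta>]) ` (RLs R t \<times> R)"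
  proof
    fix xs assume "xs \<in> RLs R (Suc t)"
    hence xs: "set xs \<subseteq> R" "length xs = Suc t" unfolding RLs_def by auto
    hence "xs \<noteq> []" by auto
    hence "xs = butlast xs @ [last xs]" by simp
    moreover have "butlast xs \<in> RLs R t" using xs unfolding RLs_def by (auto dest: in_set_butlastD)
    moreover have "last xs \<in> R" using xs \<open>xs \<noteq> []\<close> by auto
    ultimately show "xs \<in> (\<lambda>(as,\<beta>). as @ [\<beta>]) ` (RLs R t \<times> R)" by force
  qed
next
  show "(\<lambda>(as,\<beta>). as @ [\<beta>]) ` (RLs R t \<times> R) \<subseteq> RLs R (Suc t)"
    unfolding RLs_def by auto
qed

lemma RLs_inj: "inj_on (\<lambda>(as,\<beta>). as @ [\<beta>]) (RLs R t \<times> R)"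
  unfolding inj_on_def RLs_def by auto

lemma sum_Ls_Suc:
  assumes "finite R"
  shows "(\<Sum>xs\<in>RLs R (Suc t). f xs) = (\<Sum>as\<in>RLs R t. \<Sum>\<beta>\<in>R. f (as @ [\<beta>]))"
proof -
  have "(\<Sum>xs\<in>RLs R (Suc t). f xs) = (\<Sum>p\<in>RLs R t \<times> R. f ((\<lambda>(as,\<beta>). as @ [\<beta>]) p))"
    unfolding RLs_Suc by (simp add: sum.reindex[OF RLs_inj] comp_def)
  also have "\<dots> = (\<Sum>as\<in>RLs R t. \<Sum>\<beta>\<in>R. f (as @ [\<beta>]))"
    by (subst sum.cartesian_product) (simp add: case_prod_beta)
  finally show ?thesis .
qed

lemma cfg_at_app: "i \<le> length as \<Longrightarrow> cfg_at e (as @ bs) i = cfg_at e as i"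
  unfolding cfg_at_def by simp

lemma cfg_at_0: "cfg_at e as 0 = e" unfolding cfg_at_def by simp

lemma path_prob_snoc:
  "path_prob \<phi> R e (as @ [\<beta>]) = path_prob \<phi> R e as *
     (propensity \<phi> R (cfg_at e as (length as)) \<beta> / tot_propensity \<phi> R (cfg_at e as (length as)))"
proof -
  have "path_prob \<phi> R e (as @ [\<beta>]) =
     (\<Prod>i<Suc (length as). propensity \<phi> R (cfg_at e (as @ [\<beta>]) i) ((as @ [\<beta>]) ! i) / tot_propensity \<phi> R (cfg_at e (as @ [\<beta>]) i))"
    unfolding path_prob_def by simp
  also have "\<dots> = (\<Prod>i<length as. propensity \<phi> R (cfg_at e (as @ [\<beta>]) i) ((as @ [\<beta>]) ! i) / tot_propensity \<phi> R (cfg_at e (as @ [\<beta>]) i))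
      * (propensity \<phi> R (cfg_at e as (length as)) \<beta> / tot_propensity \<phi> R (cfg_at e as (length as)))"
    by (simp add: cfg_at_app)
  also have "(\<Prod>i<length as. propensity \<phi> R (cfg_at e (as @ [\<beta>]) i) ((as @ [\<beta>]) ! i) / tot_propensity \<phi> R (cfg_at e (as @ [\<beta>]) i))
      = path_prob \<phi> R e as"
    unfolding path_prob_def by (rule prod.cong) (auto simp: cfg_at_app nth_append)
  finally show ?thesis .
qed

lemma path_prob_nonneg: "0 < \<phi> \<Longrightarrow> 0 \<le> path_prob \<phi> R e as"
  unfolding path_prob_def by (auto intro!: prod_nonneg divide_nonneg_nonneg prop_nonneg tot_nonneg)

lemma path_prob_nil: "path_prob \<phi> R e [] = 1" unfolding path_prob_def by simp

lemma ns_nil: "not_stopped R Q e as 0" unfolding not_stopped_def by simp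

lemma ns_snoc:
  assumes "not_stopped R Q e (as @ [\<beta>]) (Suc (length as))"
  shows "not_stopped R Q e as (length as) \<and> \<beta> \<notin> Q \<and> \<not> Q \<subseteq> nonapp R (cfg_at e as (length as))"
proof (intro conjI)
  show "not_stopped R Q e as (length as)" unfolding not_stopped_def
  proof (intro allI impI)
    fix s assume s: "0 < s \<and> s \<le> length as"
    have "\<not> ((as @ [\<beta>]) ! (s - 1) \<in> Q \<or> Q \<subseteq> (\<Union>t'\<in>{0..s}. nonapp R (cfg_at e (as @ [\<beta>]) t')))"
      using assms s unfolding not_stopped_def by simp
    moreover have "s - 1 < length as" using s by arith
    hence "(as @ [\<beta>]) ! (s - 1) = as ! (s - 1)" by (simp add: nth_append)
    moreover have "(\<Union>t'\<in>{0..s}. nonapp R (cfg_at e (as @ [\<beta>]) t')) = (\<Union>t'\<in>{0..s}. nonapp R (cfg_at e as t'))"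
      using s by (auto simp: cfg_at_app)
    ultimately show "\<not> (as ! (s - 1) \<in> Q \<or> Q \<subseteq> (\<Union>t'\<in>{0..s}. nonapp R (cfg_at e as t')))" by simp
  qed
next
  have "\<not> ((as @ [\<beta>]) ! (Suc (length as) - 1) \<in> Q \<or> Q \<subseteq> (\<Union>t'\<in>{0..Suc (length as)}. nonapp R (cfg_at e (as @ [\<beta>]) t')))"
    using assms unfolding not_stopped_def by blast
  hence h1: "\<beta> \<notin> Q" and h2: "\<not> Q \<subseteq> (\<Union>t'\<in>{0..Suc (length as)}. nonapp R (cfg_at e (as @ [\<beta>]) t'))" by auto
  show "\<beta> \<notin> Q" by (rule h1)
  have "nonapp R (cfg_at e as (length as)) \<subseteq> (\<Union>t'\<in>{0..Suc (length as)}. nonapp R (cfg_at e (as @ [\<beta>]) t'))"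
  proof -
    have "cfg_at e (as @ [\<beta>]) (length as) = cfg_at e as (length as)" by (rule cfg_at_app) simp
    moreover have "length as \<in> {0..Suc (length as)}" by simp
    ultimately show ?thesis by (metis (no_types, lifting) UN_upper)
  qed
  thus "\<not> Q \<subseteq> nonapp R (cfg_at e as (length as))" using h2 by blast
qed

lemma ns_empty: "not_stopped R {} e as t \<Longrightarrow> t = 0"
  unfolding not_stopped_def by (cases t) auto

lemma ns_app:
  assumes "not_stopped R {\<delta>} e as t" "\<delta> \<in> R" "\<delta> \<in> app R e"
  shows "\<delta> \<in> app R (cfg_at e as t)"
proof (cases t)
  case 0 thus ?thesis using assms(3) by (simp add: cfg_at_0)
next
  case (Suc t')
  hence "\<not> ({\<delta>} \<subseteq> (\<Union>t'\<in>{0..t}. nonapp R (cfg_at e as t')))"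
    using assms(1) unfolding not_stopped_def by auto
  hence "\<delta> \<notin> nonapp R (cfg_at e as t)" by auto
  thus ?thesis using assms(2) unfolding nonapp_def by auto
qed

definition Wt :: "real \<Rightarrow> 's::finite reaction set \<Rightarrow> 's reaction set \<Rightarrow> 's config \<Rightarrow> nat \<Rightarrow> real" where
  "Wt \<phi> R Q e t = (\<Sum>as\<in>RLs R t. if not_stopped R Q e as t then path_prob \<phi> R e as else 0)"

definition Gt :: "real \<Rightarrow> 's::finite reaction set \<Rightarrow> 's reaction set \<Rightarrow> 's config \<Rightarrow> nat \<Rightarrow> real" where
  "Gt \<phi> R Q e t = (\<Sum>as\<in>RLs R t. if not_stopped R Q e as t
      then path_prob \<phi> R e as * (1 / tot_propensity \<phi> R (cfg_at e as t)) else 0)"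

lemma tot_ge_prop: "finite R \<Longrightarrow> 0 < \<phi> \<Longrightarrow> \<beta> \<in> R \<Longrightarrow> propensity \<phi> R x \<beta> \<le> tot_propensity \<phi> R x"
  unfolding tot_propensity_def by (rule member_le_sum) (auto intro: prop_nonneg)

lemma per_as:
  assumes crn: "crn R" and phi: "0 < \<phi>"
    and QC: "Q = {} \<or> (\<exists>\<delta>. Q = {\<delta>} \<and> \<delta> \<in> R \<and> \<delta> \<in> app R e)"
    and nz: "0 < e A" and len: "length as = t"
  shows "(\<Sum>\<beta>\<in>R. if not_stopped R Q e (as @ [\<beta>]) (Suc t) then path_prob \<phi> R e (as @ [\<beta>]) else 0)
     + plow \<phi> R * (if not_stopped R Q e as t then path_prob \<phi> R e as * (1 / tot_propensity \<phi> R (cfg_at e as t)) else 0)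
     \<le> (if not_stopped R Q e as t then path_prob \<phi> R e as else 0)"
proof (cases "not_stopped R Q e as t")
  case False
  have "\<not> not_stopped R Q e (as @ [\<beta>]) (Suc t)" for \<beta>
    using ns_snoc[of R Q e as \<beta>] False len by auto
  thus ?thesis using False by simp
next
  case ns: True
  have fin: "finite R" by (rule crn_finite[OF crn])
  define x where "x = cfg_at e as t"
  define p where "p = path_prob \<phi> R e as"
  have p0: "0 \<le> p" unfolding p_def by (rule path_prob_nonneg[OF phi])
  have pl: "0 < plow \<phi> R" by (rule plow_pos[OF crn phi])
  from QC show ?thesis
  proof
    assume Q: "Q = {}"
    have t0: "t = 0" using ns_empty ns Q by blast
    hence "as = []" using len by simp
    hence px: "p = 1" "x = e" unfolding p_def x_def using t0 by (auto simp: path_prob_nil cfg_at_0)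
    have F: "\<not> not_stopped R Q e (as @ [\<beta>]) (Suc t)" for \<beta> using ns_empty[of R e] Q by blast
    have "plow \<phi> R \<le> tot_propensity \<phi> R e" by (rule tot_lower[of R \<phi> e A, OF crn phi nz])
    hence "plow \<phi> R * (1 / tot_propensity \<phi> R e) \<le> 1" using pl by (simp add: divide_le_eq_1)
    thus ?thesis using F ns px unfolding p_def x_def by simp
  next
    assume "\<exists>\<delta>. Q = {\<delta>} \<and> \<delta> \<in> R \<and> \<delta> \<in> app R e"
    then obtain \<delta> where Q: "Q = {\<delta>}" and dR: "\<delta> \<in> R" and de: "\<delta> \<in> app R e" by blast
    have dx: "\<delta> \<in> app R x" unfolding x_def using ns_app[of R \<delta> e as t] ns Q dR de by simp
    have pd: "plow \<phi> R \<le> propensity \<phi> R x \<delta>"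
      by (rule prop_lower[OF crn phi dR]) (use dx in \<open>simp add: app_def\<close>)
    have td: "propensity \<phi> R x \<delta> \<le> tot_propensity \<phi> R x" by (rule tot_ge_prop[OF fin phi dR])
    have tpos: "0 < tot_propensity \<phi> R x" using pl pd td by linarith
    define a where "a = (\<lambda>\<beta>. p * (propensity \<phi> R x \<beta> / tot_propensity \<phi> R x))"
    have a0: "0 \<le> a \<beta>" for \<beta> unfolding a_def using p0 tpos prop_nonneg[OF phi, of R x \<beta>]
      by (intro mult_nonneg_nonneg divide_nonneg_nonneg) auto
    have Fle: "(if not_stopped R Q e (as @ [\<beta>]) (Suc t) then path_prob \<phi> R e (as @ [\<beta>]) else 0)
         \<le> (if \<beta> \<noteq> \<delta> then a \<beta> else 0)" for \<beta>
    proof (cases "not_stopped R Q e (as @ [\<beta>]) (Suc t)")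
      case True
      hence "\<beta> \<notin> Q" using ns_snoc[of R Q e as \<beta>] len by simp
      moreover have "path_prob \<phi> R e (as @ [\<beta>]) = a \<beta>"
        unfolding a_def p_def x_def using path_prob_snoc[of \<phi> R e as \<beta>] len by simp
      ultimately show ?thesis using True Q by simp
    next
      case False thus ?thesis using a0 by simp
    qed
    have "(\<Sum>\<beta>\<in>R. if not_stopped R Q e (as @ [\<beta>]) (Suc t) then path_prob \<phi> R e (as @ [\<beta>]) else 0)
        \<le> (\<Sum>\<beta>\<in>R. if \<beta> \<noteq> \<delta> then a \<beta> else 0)" by (rule sum_mono) (rule Fle)
    also have "(\<Sum>\<beta>\<in>R. if \<beta> \<noteq> \<delta> then a \<beta> else 0) = (\<Sum>\<beta>\<in>R - {\<delta>}. a \<beta>)"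
    proof -
      have "(\<Sum>\<beta>\<in>R. if \<beta> \<noteq> \<delta> then a \<beta> else 0) = (\<Sum>\<beta>\<in>R - {\<delta>}. if \<beta> \<noteq> \<delta> then a \<beta> else 0)"
        using sum.remove[OF fin dR, of "\<lambda>\<beta>. if \<beta> \<noteq> \<delta> then a \<beta> else 0"] by simp
      also have "\<dots> = (\<Sum>\<beta>\<in>R - {\<delta>}. a \<beta>)" by (rule sum.cong) auto
      finally show ?thesis .
    qed
    also have "\<dots> = (\<Sum>\<beta>\<in>R. a \<beta>) - a \<delta>"
      using sum.remove[OF fin dR, of a] by simp
    also have "(\<Sum>\<beta>\<in>R. a \<beta>) = p"
    proof -
      have "(\<Sum>\<beta>\<in>R. a \<beta>) = p * ((\<Sum>\<beta>\<in>R. propensity \<phi> R x \<beta>) / tot_propensity \<phi> R x)"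
        unfolding a_def by (simp add: sum_distrib_left sum_divide_distrib)
      also have "\<dots> = p" using tpos unfolding tot_propensity_def by simp
      finally show ?thesis .
    qed
    finally have S: "(\<Sum>\<beta>\<in>R. if not_stopped R Q e (as @ [\<beta>]) (Suc t) then path_prob \<phi> R e (as @ [\<beta>]) else 0)
        \<le> p - a \<delta>" .
    have "a \<delta> \<ge> p * (plow \<phi> R / tot_propensity \<phi> R x)"
      unfolding a_def using p0 tpos pd by (intro mult_left_mono divide_right_mono) auto
    hence "p - a \<delta> + plow \<phi> R * (p * (1 / tot_propensity \<phi> R x)) \<le> p" by (simp add: mult.commute)
    thus ?thesis using S ns unfolding p_def x_def by simp
  qed
qed

lemma step_ineq:
  assumes crn: "crn R" and phi: "0 < \<phi>"
    and QC: "Q = {} \<or> (\<exists>\<delta>. Q = {\<delta>} \<and> \<delta> \<in> R \<and> \<delta> \<in> app R e)"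
    and nz: "0 < e A"
  shows "Wt \<phi> R Q e (Suc t) + plow \<phi> R * Gt \<phi> R Q e t \<le> Wt \<phi> R Q e t"
proof -
  have fin: "finite R" by (rule crn_finite[OF crn])
  have "Wt \<phi> R Q e (Suc t) + plow \<phi> R * Gt \<phi> R Q e t =
     (\<Sum>as\<in>RLs R t. (\<Sum>\<beta>\<in>R. if not_stopped R Q e (as @ [\<beta>]) (Suc t) then path_prob \<phi> R e (as @ [\<beta>]) else 0)
     + plow \<phi> R * (if not_stopped R Q e as t then path_prob \<phi> R e as * (1 / tot_propensity \<phi> R (cfg_at e as t)) else 0))"
    unfolding Wt_def Gt_def sum_Ls_Suc[OF fin] by (simp add: sum.distrib sum_distrib_left)
  also have "\<dots> \<le> Wt \<phi> R Q e t" unfolding Wt_def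
    by (rule sum_mono) (rule per_as[OF crn phi QC nz], simp add: RLs_def)
  finally show ?thesis .
qed

lemma Wt_nonneg: "0 < \<phi> \<Longrightarrow> 0 \<le> Wt \<phi> R Q e t"
  unfolding Wt_def by (auto intro!: sum_nonneg path_prob_nonneg)

lemma Gt_nonneg: "0 < \<phi> \<Longrightarrow> 0 \<le> Gt \<phi> R Q e t"
  unfolding Gt_def by (auto intro!: sum_nonneg divide_nonneg_nonneg mult_nonneg_nonneg path_prob_nonneg tot_nonneg)

lemma Wt_0: "Wt \<phi> R Q e 0 = 1"
  unfolding Wt_def RLs_0 by (simp add: ns_nil path_prob_nil)

lemma TC_eq: "0 < \<phi> \<Longrightarrow> TC \<phi> R Q e = (\<Sum>t. ennreal (Gt \<phi> R Q e t))"
proof -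
  assume phi: "0 < \<phi>"
  have "(\<Sum>as\<in>{as. set as \<subseteq> R \<and> length as = t}.
        (if not_stopped R Q e as t
         then ennreal (path_prob \<phi> R e as) * ennreal (1 / tot_propensity \<phi> R (cfg_at e as t))
         else 0)) = ennreal (Gt \<phi> R Q e t)" for t
  proof -
    have "(\<Sum>as\<in>{as. set as \<subseteq> R \<and> length as = t}.
        (if not_stopped R Q e as t
         then ennreal (path_prob \<phi> R e as) * ennreal (1 / tot_propensity \<phi> R (cfg_at e as t))
         else 0)) = (\<Sum>as\<in>RLs R t. ennreal (if not_stopped R Q e as t
      then path_prob \<phi> R e as * (1 / tot_propensity \<phi> R (cfg_at e as t)) else 0))"
      unfolding RLs_def
      by (rule sum.cong) (auto simp: ennreal_mult''[symmetric] tot_nonneg[OF phi])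
    also have "\<dots> = ennreal (Gt \<phi> R Q e t)" unfolding Gt_def
      by (rule sum_ennreal) (auto intro!: divide_nonneg_nonneg mult_nonneg_nonneg path_prob_nonneg[OF phi] tot_nonneg[OF phi])
    finally show ?thesis .
  qed
  thus ?thesis unfolding TC_def by simp
qed

lemma TC_bound:
  assumes crn: "crn R" and phi: "0 < \<phi>"
    and QC: "Q = {} \<or> (\<exists>\<delta>. Q = {\<delta>} \<and> \<delta> \<in> R \<and> \<delta> \<in> app R e)"
    and nz: "0 < e A"
  shows "TC \<phi> R Q e \<le> ennreal (1 / plow \<phi> R)"
proof -
  have pl: "0 < plow \<phi> R" by (rule plow_pos[OF crn phi])
  have tel: "(\<Sum>t<N. plow \<phi> R * Gt \<phi> R Q e t) \<le> 1 - Wt \<phi> R Q e N" for N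
  proof (induction N)
    case 0 thus ?case by (simp add: Wt_0)
  next
    case (Suc N)
    thus ?case using step_ineq[OF crn phi QC nz, of N] by simp
  qed
  have part: "(\<Sum>t<N. Gt \<phi> R Q e t) \<le> 1 / plow \<phi> R" for N
  proof -
    have "plow \<phi> R * (\<Sum>t<N. Gt \<phi> R Q e t) \<le> 1"
      using tel[of N] Wt_nonneg[OF phi, of R Q e N] by (simp add: sum_distrib_left)
    thus ?thesis using pl by (simp add: field_simps)
  qed
  have "TC \<phi> R Q e = (SUP N. \<Sum>t<N. ennreal (Gt \<phi> R Q e t))"
    unfolding TC_eq[OF phi] by (rule suminf_eq_SUP)
  also have "\<dots> \<le> ennreal (1 / plow \<phi> R)"
  proof (rule SUP_least)
    fix N
    have "(\<Sum>t<N. ennreal (Gt \<phi> R Q e t)) = ennreal (\<Sum>t<N. Gt \<phi> R Q e t)"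
      by (rule sum_ennreal) (rule Gt_nonneg[OF phi])
    also have "\<dots> \<le> ennreal (1 / plow \<phi> R)" by (rule ennreal_leI) (rule part)
    finally show "(\<Sum>t<N. ennreal (Gt \<phi> R Q e t)) \<le> ennreal (1 / plow \<phi> R)" .
  qed
  finally show ?thesis .
qed

lemma reach_refl: "reach R x x" unfolding reach_def by simp

lemma reach_trans: "reach R x y \<Longrightarrow> reach R y z \<Longrightarrow> reach R x z"
  unfolding reach_def by (rule rtranclp_trans)

lemma reach_step: "\<beta> \<in> app R x \<Longrightarrow> reach R x (apply_r \<beta> x)"
  unfolding reach_def step_def by (rule r_into_rtranclp) blast

lemma exec_reach:
  assumes "execution R c \<alpha>" shows "reach R (c t) (c (t + k))"
proof (induction k)
  case 0 thus ?case by (simp add: reach_refl)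
next
  case (Suc k)
  have "\<alpha> (t + k) \<in> app R (c (t + k))" "c (Suc (t + k)) = apply_r (\<alpha> (t + k)) (c (t + k))"
    using assms unfolding execution_def by auto
  hence "reach R (c (t + k)) (c (t + Suc k))" using reach_step by simp
  thus ?case using Suc reach_trans by blast
qed

lemma exec_reach_le:
  assumes "execution R c \<alpha>" "t \<le> t'" shows "reach R (c t) (c t')"
  using exec_reach[OF assms(1), of t "t' - t"] assms(2) by simp

lemma apply_nz:
  assumes "crn R" "\<beta> \<in> R" shows "\<exists>A. 0 < apply_r \<beta> x A"
proof -
  have "csize (fst \<beta>) \<le> csize (snd \<beta>)" "csize (fst \<beta>) = 1 \<or> csize (fst \<beta>) = 2"
    using crn_size[OF assms(1), of "fst \<beta>" "snd \<beta>"] assms(2) by auto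
  hence "0 < csize (snd \<beta>)" by auto
  then obtain A where "0 < snd \<beta> A" using csize_pos by blast
  hence "0 < apply_r \<beta> x A" unfolding apply_r_def by simp
  thus ?thesis by blast
qed

lemma exec_nz:
  assumes "crn R" "execution R c \<alpha>" "1 \<le> csize (c 0)"
  shows "\<exists>A. 0 < c t A"
proof (cases t)
  case 0 thus ?thesis using assms(3) csize_pos[of "c 0"] by simp
next
  case (Suc t')
  have "\<alpha> t' \<in> app R (c t')" "c (Suc t') = apply_r (\<alpha> t') (c t')"
    using assms(2) unfolding execution_def by auto
  moreover have "\<alpha> t' \<in> R" using calculation(1) unfolding app_def by simp
  ultimately show ?thesis using apply_nz[OF assms(1)] Suc by metis
qed

lemma nz_csize: "0 < x A \<Longrightarrow> 1 \<le> csize (x::'s::finite config)"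
  using csize_ge_member[of x A] by simp

lemma finite_bounded: "finite {y :: 's::finite config. csize y \<le> D}"
proof -
  have "{y :: 's config. csize y \<le> D} \<subseteq> Pi\<^sub>E UNIV (\<lambda>_. {..D})"
    using csize_ge_member by (auto simp: PiE_UNIV_domain Pi_def intro: order_trans)
  moreover have "finite (Pi\<^sub>E (UNIV :: 's set) (\<lambda>_. {..D}))" by (rule finite_PiE) auto
  ultimately show ?thesis by (rule finite_subset)
qed

fun wpath :: "'s reaction set \<Rightarrow> 's config \<Rightarrow> 's reaction list \<Rightarrow> 's config \<Rightarrow> bool" where
  "wpath R x [] y = (x = y)"
| "wpath R x (\<beta> # as) y = (\<beta> \<in> app R x \<and> wpath R (apply_r \<beta> x) as y)"

lemma wpath_append: "wpath R x (as @ bs) z = (\<exists>y. wpath R x as y \<and> wpath R y bs z)"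
  by (induction as arbitrary: x) auto

lemma wpath_reach: "wpath R x as y \<Longrightarrow> reach R x y"
proof (induction as arbitrary: x)
  case Nil thus ?case by (simp add: reach_refl)
next
  case (Cons \<beta> as)
  thus ?case using reach_step reach_trans by fastforce
qed

lemma reach_wpath: "reach R x y \<Longrightarrow> \<exists>as. wpath R x as y"
  unfolding reach_def
proof (induction rule: rtranclp_induct)
  case base
  have "wpath R x [] x" by simp
  thus ?case by blast
next
  case (step y z)
  then obtain as where "wpath R x as y" by blast
  moreover obtain \<beta> where "\<beta> \<in> app R y" "z = apply_r \<beta> y" using step(2) unfolding step_def by blast
  ultimately have "wpath R x (as @ [\<beta>]) z" by (auto simp: wpath_append)
  thus ?case by blast
qed

lemma wpath_fold: "wpath R x as y \<Longrightarrow> y = fold apply_r as x"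
  by (induction as arbitrary: x) auto

lemma wpath_end: assumes "wpath R x as y" shows "cfg_at x as (length as) = y"
  unfolding cfg_at_def using wpath_fold[OF assms] by simp

lemma wpath_cfg:
  assumes "wpath R x as y" "i < length as"
  shows "as ! i \<in> app R (cfg_at x as i) \<and> cfg_at x as (Suc i) = apply_r (as ! i) (cfg_at x as i)"
proof -
  have "as = take i as @ (as ! i # drop (Suc i) as)" using assms(2) by (simp add: id_take_nth_drop)
  then obtain z where z: "wpath R x (take i as) z" "wpath R z (as ! i # drop (Suc i) as) y"
    using assms(1) wpath_append by metis
  have "z = cfg_at x as i" unfolding cfg_at_def using wpath_fold[OF z(1)] .
  moreover have "cfg_at x as (Suc i) = apply_r (as ! i) (cfg_at x as i)"
    unfolding cfg_at_def using assms(2) by (simp add: take_Suc_conv_app_nth)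
  ultimately show ?thesis using z(2) by simp
qed

lemma wpath_cfg_reach:
  assumes "wpath R x as y" "i \<le> length as"
  shows "reach R (cfg_at x as i) y"
proof -
  obtain z where z: "wpath R x (take i as) z" "wpath R z (drop i as) y"
    using assms(1) wpath_append[of R x "take i as" "drop i as" y] by auto
  have "z = cfg_at x as i" unfolding cfg_at_def using wpath_fold[OF z(1)] .
  thus ?thesis using wpath_reach[OF z(2)] by simp
qed

lemma cfg_at_prefix: "wpath R x pre x \<Longrightarrow> i \<le> length w \<Longrightarrow> cfg_at x (pre @ w @ post) (length pre + i) = cfg_at x w i"
proof -
  assume "wpath R x pre x" "i \<le> length w"
  hence "fold apply_r pre x = x" using wpath_fold by metis
  moreover have "i - length w = 0" using \<open>i \<le> length w\<close> by simp
  ultimately show ?thesis unfolding cfg_at_def by simp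
qed

lemma concat_closed:
  assumes "\<forall>w\<in>set Ls. wpath R x w x"
  shows "wpath R x (concat Ls) x \<and> (\<forall>w\<in>set Ls. \<exists>pre post. concat Ls = pre @ w @ post \<and> wpath R x pre x)"
  using assms
proof (induction Ls)
  case Nil thus ?case by simp
next
  case (Cons w Ls)
  hence IH: "wpath R x (concat Ls) x" "\<forall>w\<in>set Ls. \<exists>pre post. concat Ls = pre @ w @ post \<and> wpath R x pre x"
    and ww: "wpath R x w x" by auto
  have "wpath R x (concat (w # Ls)) x" using IH(1) ww by (auto simp: wpath_append)
  moreover have "\<exists>pre post. concat (w # Ls) = pre @ w' @ post \<and> wpath R x pre x" if "w' \<in> set (w # Ls)" for w'
  proof (cases "w' = w")
    case True
    have "concat (w # Ls) = [] @ w' @ concat Ls" "wpath R x [] x" using True by auto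
    thus ?thesis by blast
  next
    case False
    hence "w' \<in> set Ls" using that by simp
    then obtain pre post where "concat Ls = pre @ w' @ post" "wpath R x pre x" using IH(2) by blast
    hence "concat (w # Ls) = (w @ pre) @ w' @ post" "wpath R x (w @ pre) x" using ww by (auto simp: wpath_append)
    thus ?thesis by blast
  qed
  ultimately show ?case by blast
qed

definition scc :: "'s reaction set \<Rightarrow> 's config \<Rightarrow> 's config set" where
  "scc R x = {y. reach R x y \<and> reach R y x}"

definition good :: "'s reaction set \<Rightarrow> 's config \<Rightarrow> 's reaction \<Rightarrow> bool" where
  "good R x \<delta> \<longleftrightarrow> \<delta> \<in> NV R \<and> (\<forall>y\<in>scc R x. \<delta> \<in> app R y \<and> apply_r \<delta> y \<notin> scc R x)"

lemma scc_self: "x \<in> scc R x" unfolding scc_def by (simp add: reach_refl)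

lemma apply_void: "fst \<beta> = snd \<beta> \<Longrightarrow> fst \<beta> \<le> y \<Longrightarrow> apply_r \<beta> y = y"
  unfolding apply_r_def by (auto simp: le_fun_def)

lemma cyc_walk:
  assumes crn: "crn R" and nz: "0 < x A" and nogood: "\<not> (\<exists>\<delta>. good R x \<delta>)"
  shows "\<exists>W. wpath R x W x \<and> 0 < length W \<and>
     (\<forall>\<beta>\<in>R. \<exists>p<length W. W ! p = \<beta> \<or> \<beta> \<notin> app R (cfg_at x W p))"
proof -
  define S where "S = scc R x"
  obtain K where K: "\<forall>c c'. 1 \<le> csize c \<longrightarrow> reach R c c' \<longrightarrow> csize c' \<le> K * csize c"
    using crn_density[OF crn] by blast
  have "S \<subseteq> {y. csize y \<le> K * csize x}"
  proof
    fix y assume "y \<in> S"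
    hence "reach R x y" unfolding S_def scc_def by simp
    hence "csize y \<le> K * csize x" using K nz_csize[of x A, OF nz] by blast
    thus "y \<in> {y. csize y \<le> K * csize x}" by simp
  qed
  hence finS: "finite S" using finite_bounded finite_subset by blast
  have fin: "finite R" by (rule crn_finite[OF crn])
  define Tr where "Tr = {(y,\<beta>). y \<in> S \<and> \<beta> \<in> app R y \<and> apply_r \<beta> y \<in> S}"
  have "Tr \<subseteq> S \<times> R" unfolding Tr_def app_def by auto
  hence finT: "finite Tr" using finS fin finite_subset by blast
  have xS: "x \<in> S" unfolding S_def by (rule scc_self)
  have inS: "y \<in> S" if "reach R x y" "reach R y x" for y using that unfolding S_def scc_def by simp
  have Tne: "Tr \<noteq> {}"
  proof
    assume T0: "Tr = {}"
    have S1: "S = {x}"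
    proof (rule ccontr)
      assume "S \<noteq> {x}"
      then obtain y where y: "y \<in> S" "y \<noteq> x" using xS by blast
      hence rxy: "reach R x y" and ryx: "reach R y x" unfolding S_def scc_def by auto
      from rxy y(2) obtain x1 where "step R x x1" "(step R)\<^sup>*\<^sup>* x1 y"
        unfolding reach_def by (metis converse_rtranclpE)
      then obtain \<beta> where b: "\<beta> \<in> app R x" "x1 = apply_r \<beta> x" "reach R x1 y"
        unfolding step_def reach_def by blast
      have "x1 \<in> S" using inS[of x1] reach_step[OF b(1)] b(2) reach_trans[OF b(3) ryx] by simp
      hence "(x, \<beta>) \<in> Tr" unfolding Tr_def using xS b by simp
      thus False using T0 by simp
    qed
    obtain \<beta> where b: "\<beta> \<in> R" "fst \<beta> \<le> x" using crn_uni[of R x A, OF crn nz] by blast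
    have bx: "\<beta> \<in> app R x" using b unfolding app_def by simp
    have out: "apply_r \<beta> x \<notin> S" using T0 xS bx unfolding Tr_def by blast
    hence "fst \<beta> \<noteq> snd \<beta>" using apply_void[of \<beta> x] b(2) xS by auto
    hence "good R x \<beta>" unfolding good_def NV_def using b bx out S1 unfolding S_def by auto
    thus False using nogood by blast
  qed
  have "\<forall>y\<in>S. \<exists>as. wpath R x as y" unfolding S_def scc_def using reach_wpath by blast
  then obtain fa where fa: "\<forall>y\<in>S. wpath R x (fa y) y" by metis
  have "\<forall>y\<in>S. \<exists>as. wpath R y as x" unfolding S_def scc_def using reach_wpath by blast
  then obtain fb where fb: "\<forall>y\<in>S. wpath R y (fb y) x" by metis
  define visit where "visit = (\<lambda>y. fa y @ fb y)"
  define trav where "trav = (\<lambda>(y,\<beta>). fa y @ [\<beta>] @ fb (apply_r \<beta> y))"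
  obtain SL where SL: "set SL = S" using finite_list[OF finS] by blast
  obtain TL where TL: "set TL = Tr" using finite_list[OF finT] by blast
  define Ls where "Ls = map visit SL @ map trav TL"
  define W where "W = concat Ls"
  have vis_ok: "wpath R x (visit y) x" if "y \<in> S" for y
    unfolding visit_def using fa fb that by (auto simp: wpath_append)
  have trav_ok: "wpath R x (trav t) x" if "t \<in> Tr" for t
  proof -
    obtain y \<beta> where t: "t = (y,\<beta>)" by (cases t)
    have "y \<in> S" "\<beta> \<in> app R y" "apply_r \<beta> y \<in> S" using that t unfolding Tr_def by auto
    thus ?thesis unfolding trav_def t using fa fb by (auto simp: wpath_append)
  qed
  have "\<forall>w\<in>set Ls. wpath R x w x" unfolding Ls_def using SL TL vis_ok trav_ok by auto
  note cc = concat_closed[OF this]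
  have WW: "wpath R x W x" unfolding W_def using cc by simp
  have blocks: "\<And>w. w \<in> set Ls \<Longrightarrow> \<exists>pre post. W = pre @ w @ post \<and> wpath R x pre x"
    unfolding W_def using cc by blast
  have fire: "\<exists>p<length W. W ! p = \<beta>" if "(y,\<beta>) \<in> Tr" for y \<beta>
  proof -
    have "trav (y,\<beta>) \<in> set Ls" unfolding Ls_def using that TL by auto
    from blocks[OF this] obtain pre post where P0: "W = pre @ trav (y,\<beta>) @ post"
      by blast
    hence "W = pre @ (fa y @ [\<beta>] @ fb (apply_r \<beta> y)) @ post" unfolding trav_def by simp
    hence "W ! (length pre + length (fa y)) = \<beta>" "length pre + length (fa y) < length W"
      by (simp_all add: nth_append)
    thus ?thesis by blast
  qed
  have Lpos: "0 < length W"
  proof -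
    obtain t where "t \<in> Tr" using Tne by blast
    then obtain y \<beta> where "(y,\<beta>) \<in> Tr" by (cases t) auto
    thus ?thesis using fire by fastforce
  qed
  have visitp: "\<exists>p<length W. cfg_at x W p = y" if "y \<in> S" for y
  proof -
    have "visit y \<in> set Ls" unfolding Ls_def using that SL by auto
    from blocks[OF this] obtain pre post where P0: "W = pre @ visit y @ post" "wpath R x pre x"
      by blast
    have P: "W = pre @ (fa y @ fb y) @ post" "wpath R x pre x" using P0 unfolding visit_def by simp_all
    have "cfg_at x W (length pre + length (fa y)) = cfg_at x (fa y @ fb y) (length (fa y))"
      unfolding P(1) by (rule cfg_at_prefix[OF P(2)]) simp
    also have "\<dots> = cfg_at x (fa y) (length (fa y))" by (rule cfg_at_app) simp
    also have "\<dots> = y" using wpath_end fa that by blast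
    finally have c: "cfg_at x W (length pre + length (fa y)) = y" .
    have le: "length pre + length (fa y) \<le> length W" unfolding P(1) by simp
    show ?thesis
    proof (cases "length pre + length (fa y) < length W")
      case True thus ?thesis using c by blast
    next
      case False
      hence "length pre + length (fa y) = length W" using le by simp
      hence "y = x" using c wpath_end[OF WW] by simp
      moreover have "cfg_at x W 0 = x" by (simp add: cfg_at_0)
      ultimately show ?thesis using Lpos by blast
    qed
  qed
  have fair: "\<exists>p<length W. W ! p = \<beta> \<or> \<beta> \<notin> app R (cfg_at x W p)" if bR: "\<beta> \<in> R" for \<beta>
  proof (cases "\<exists>y\<in>S. \<beta> \<notin> app R y")
    case True
    then obtain y where "y \<in> S" "\<beta> \<notin> app R y" by blast
    thus ?thesis using visitp by blast
  next
    case False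
    hence allapp: "\<forall>y\<in>S. \<beta> \<in> app R y" by blast
    have "\<exists>y. (y,\<beta>) \<in> Tr"
    proof (cases "fst \<beta> = snd \<beta>")
      case True
      have "\<beta> \<in> app R x" using allapp xS by blast
      hence "apply_r \<beta> x = x" using apply_void[OF True] unfolding app_def by simp
      hence "(x,\<beta>) \<in> Tr" unfolding Tr_def using xS \<open>\<beta> \<in> app R x\<close> by simp
      thus ?thesis by blast
    next
      case False
      hence "\<beta> \<in> NV R" unfolding NV_def using bR by simp
      hence "\<not> (\<forall>y\<in>S. \<beta> \<in> app R y \<and> apply_r \<beta> y \<notin> S)" using nogood unfolding good_def S_def by blast
      then obtain y where "y \<in> S" "apply_r \<beta> y \<in> S" using allapp by blast
      hence "(y,\<beta>) \<in> Tr" unfolding Tr_def using allapp by simp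
      thus ?thesis by blast
    qed
    thus ?thesis using fire by blast
  qed
  show ?thesis using WW Lpos fair by blast
qed

lemma no_good_contra:
  assumes crn: "crn R"
    and closed: "\<And>y z. y \<in> G \<Longrightarrow> reach R y z \<Longrightarrow> z \<in> G"
    and correct: "\<And>c' \<alpha>'. execution R c' \<alpha>' \<Longrightarrow> weakly_fair R c' \<alpha>' \<Longrightarrow> c' 0 = c 0 \<Longrightarrow> \<exists>t. c' t \<in> G"
    and exec: "execution R c \<alpha>"
    and nz: "0 < c T A"
    and notG: "c T \<notin> G"
    and nogood: "\<not> (\<exists>\<delta>. good R (c T) \<delta>)"
  shows False
proof -
  define x where "x = c T"
  obtain W where W: "wpath R x W x" "0 < length W"
    and Wf: "\<forall>\<beta>\<in>R. \<exists>p<length W. W ! p = \<beta> \<or> \<beta> \<notin> app R (cfg_at x W p)"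
    using cyc_walk[OF crn, of "c T" A] nz nogood unfolding x_def by blast
  define L where "L = length W"
  have L0: "0 < L" using W(2) unfolding L_def .
  define c' where "c' = (\<lambda>t. if t \<le> T then c t else cfg_at x W ((t - T) mod L))"
  define \<alpha>' where "\<alpha>' = (\<lambda>t. if t < T then \<alpha> t else W ! ((t - T) mod L))"
  have c'ge: "c' t = cfg_at x W ((t - T) mod L)" if "T \<le> t" for t
  proof (cases "t = T")
    case True thus ?thesis unfolding c'_def x_def by (simp add: cfg_at_0)
  next
    case False thus ?thesis using that unfolding c'_def by simp
  qed
  have a'ge: "\<alpha>' t = W ! ((t - T) mod L)" if "T \<le> t" for t
    using that unfolding \<alpha>'_def by simp
  have ex': "execution R c' \<alpha>'" unfolding execution_def
  proof
    fix t
    show "\<alpha>' t \<in> app R (c' t) \<and> c' (Suc t) = apply_r (\<alpha>' t) (c' t)"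
    proof (cases "t < T")
      case True
      thus ?thesis using exec unfolding execution_def c'_def \<alpha>'_def by simp
    next
      case False
      define k where "k = (t - T) mod L"
      have kL: "k < L" unfolding k_def using L0 by simp
      have st: "\<alpha>' t \<in> app R (c' t)" "cfg_at x W (Suc k) = apply_r (\<alpha>' t) (c' t)"
        using wpath_cfg[OF W(1), of k] kL False c'ge a'ge unfolding L_def k_def by auto
      have "c' (Suc t) = cfg_at x W ((Suc (t - T)) mod L)" using c'ge[of "Suc t"] False
        by (simp add: Suc_diff_le)
      also have "\<dots> = cfg_at x W (Suc k)"
      proof (cases "Suc k = L")
        case True
        hence "Suc (t - T) mod L = 0" unfolding k_def by (simp add: mod_Suc)
        moreover have "cfg_at x W (Suc k) = x" using True wpath_end[OF W(1)] unfolding L_def by simp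
        ultimately show ?thesis by (simp add: cfg_at_0)
      next
        case False
        hence "Suc (t - T) mod L = Suc k" unfolding k_def by (simp add: mod_Suc)
        thus ?thesis by simp
      qed
      finally show ?thesis using st by simp
    qed
  qed
  have wf': "weakly_fair R c' \<alpha>'" unfolding weakly_fair_def
  proof (intro allI ballI)
    fix t \<beta> assume "\<beta> \<in> app R (c' t)"
    hence "\<beta> \<in> R" unfolding app_def by simp
    then obtain p where p: "p < L" "W ! p = \<beta> \<or> \<beta> \<notin> app R (cfg_at x W p)" using Wf unfolding L_def by blast
    define t' where "t' = T + L * t + p"
    have h: "t \<le> L * t" using mult_le_mono1[of 1 L t] L0 by simp
    have tt: "t \<le> t'" "T \<le> t'" unfolding t'_def using h by linarith+
    have "(t' - T) mod L = p" unfolding t'_def using p(1) by simp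
    hence "\<alpha>' t' = W ! p" "c' t' = cfg_at x W p" using c'ge[OF tt(2)] a'ge[OF tt(2)] by auto
    thus "\<exists>t'\<ge>t. \<alpha>' t' = \<beta> \<or> \<beta> \<notin> app R (c' t')" using tt p(2) by metis
  qed
  have "c' 0 = c 0" unfolding c'_def by simp
  then obtain t where tG: "c' t \<in> G" using correct[OF ex' wf'] by blast
  show False
  proof (cases "t \<le> T")
    case True
    hence "c t \<in> G" using tG unfolding c'_def by simp
    hence "c T \<in> G" using closed exec_reach_le[OF exec True] by blast
    thus False using notG by simp
  next
    case False
    define k where "k = (t - T) mod L"
    have "k \<le> length W" unfolding k_def L_def using L0 L_def by (simp add: less_imp_le)
    hence "reach R (cfg_at x W k) x" by (rule wpath_cfg_reach[OF W(1)])
    moreover have "cfg_at x W k \<in> G" using tG c'ge[of t] False unfolding k_def by simp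
    ultimately have "x \<in> G" using closed by blast
    thus False using notG unfolding x_def by simp
  qed
qed

definition rho :: "'s reaction set \<Rightarrow> 's config \<Rightarrow> 's reaction set" where
  "rho R x = (if \<exists>\<delta>. good R x \<delta> then {SOME \<delta>. good R x \<delta>} else {})"

lemma rho_good: "\<exists>\<delta>. good R x \<delta> \<Longrightarrow> rho R x = {SOME \<delta>. good R x \<delta>} \<and> good R x (SOME \<delta>. good R x \<delta>)"
  unfolding rho_def using someI_ex[of "good R x"] by simp

lemma rho_policy: "runtime_policy R (rho R)"
  unfolding runtime_policy_def
proof
  fix x
  show "rho R x \<subseteq> NV R"
  proof (cases "\<exists>\<delta>. good R x \<delta>")
    case True thus ?thesis using rho_good[OF True] unfolding good_def by simp
  next
    case False thus ?thesis unfolding rho_def by simp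
  qed
qed

lemma rho_QC: "rho R x = {} \<or> (\<exists>\<delta>. rho R x = {\<delta>} \<and> \<delta> \<in> R \<and> \<delta> \<in> app R x)"
proof (cases "\<exists>\<delta>. good R x \<delta>")
  case True
  define \<delta> where "\<delta> = (SOME \<delta>. good R x \<delta>)"
  have "rho R x = {\<delta>}" "good R x \<delta>" using rho_good[OF True] unfolding \<delta>_def by auto
  moreover have "\<delta> \<in> R" "\<delta> \<in> app R x" using calculation(2) scc_self[of x R] unfolding good_def NV_def by auto
  ultimately show ?thesis by blast
next
  case False thus ?thesis unfolding rho_def by simp
qed

lemma tau_spec:
  assumes wf: "weakly_fair R c \<alpha>"
    and QC: "Q = {} \<or> (\<exists>\<delta>. Q = {\<delta>} \<and> \<delta> \<in> R \<and> \<delta> \<in> app R (c t0))"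
  shows "t0 < tau R c \<alpha> t0 Q \<and> (\<alpha> (tau R c \<alpha> t0 Q - 1) \<in> Q \<or> Q \<subseteq> (\<Union>t'\<in>{t0..tau R c \<alpha> t0 Q}. nonapp R (c t')))"
  unfolding tau_def
proof (rule LeastI_ex)
  show "\<exists>s. t0 < s \<and> (\<alpha> (s - 1) \<in> Q \<or> Q \<subseteq> (\<Union>t'\<in>{t0..s}. nonapp R (c t')))"
    using QC
  proof
    assume "Q = {}"
    thus ?thesis by (intro exI[of _ "Suc t0"]) simp
  next
    assume "\<exists>\<delta>. Q = {\<delta>} \<and> \<delta> \<in> R \<and> \<delta> \<in> app R (c t0)"
    then obtain \<delta> where Q: "Q = {\<delta>}" and dR: "\<delta> \<in> R" and da: "\<delta> \<in> app R (c t0)" by blast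
    obtain t' where t': "t' \<ge> t0" "\<alpha> t' = \<delta> \<or> \<delta> \<notin> app R (c t')"
      using wf da unfolding weakly_fair_def by blast
    show ?thesis
    proof (cases "\<alpha> t' = \<delta>")
      case True
      thus ?thesis using t'(1) Q by (intro exI[of _ "Suc t'"]) simp
    next
      case False
      hence na: "\<delta> \<notin> app R (c t')" using t'(2) by simp
      hence "t' \<noteq> t0" using da by auto
      hence "t0 < t'" using t'(1) by simp
      moreover have "\<delta> \<in> nonapp R (c t')" using na dR unfolding nonapp_def by simp
      ultimately show ?thesis using Q t'(1) by (intro exI[of _ t']) auto
    qed
  qed
qed

lemma rounds_main:
  fixes R :: "'s::finite reaction set"
  assumes crn: "crn R"
    and closed: "\<And>y z. y \<in> G \<Longrightarrow> reach R y z \<Longrightarrow> z \<in> G"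
    and correct: "\<And>c' \<alpha>'. execution R c' \<alpha>' \<Longrightarrow> weakly_fair R c' \<alpha>' \<Longrightarrow> c' 0 = c 0 \<Longrightarrow> \<exists>t. c' t \<in> G"
    and exec: "execution R c \<alpha>" and wf: "weakly_fair R c \<alpha>"
    and sz: "1 \<le> csize (c 0)" and skip: "skipping_policy \<sigma>"
    and K: "\<forall>c c'. 1 \<le> csize c \<longrightarrow> reach R c c' \<longrightarrow> csize c' \<le> K * csize c"
  shows "(LEAST i. (LEAST t. c t \<in> G) \<le> round_start R c \<alpha> (rho R) \<sigma> i)
           \<le> card {y::'s config. csize y \<le> K * csize (c 0)} + 1"
proof -
  define rs where "rs = round_start R c \<alpha> (rho R) \<sigma>"
  define te where "te = (\<lambda>i. \<sigma> (rs i))"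
  define e where "e = (\<lambda>i. c (te i))"
  have rsS: "rs (Suc i) = tau R c \<alpha> (te i) (rho R (e i))" for i
    by (simp add: rs_def te_def e_def)
  have nz: "\<exists>A. 0 < c t A" for t by (rule exec_nz[OF crn exec sz])
  have QC: "rho R (e i) = {} \<or> (\<exists>\<delta>. rho R (e i) = {\<delta>} \<and> \<delta> \<in> R \<and> \<delta> \<in> app R (c (te i)))" for i
    using rho_QC[of R "e i"] unfolding e_def by simp
  have tspec: "te i < rs (Suc i) \<and> (\<alpha> (rs (Suc i) - 1) \<in> rho R (e i) \<or>
      rho R (e i) \<subseteq> (\<Union>t'\<in>{te i..rs (Suc i)}. nonapp R (c t')))" for i
    unfolding rsS by (rule tau_spec[OF wf QC])
  have te_ge: "rs i \<le> te i" for i using skip unfolding skipping_policy_def te_def by simp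
  have inc: "rs i < rs (Suc i)" for i using te_ge[of i] tspec[of i] by simp
  have rs_ge: "i \<le> rs i" for i
  proof (induction i)
    case 0 thus ?case by simp
  next
    case (Suc i) thus ?case using inc[of i] by simp
  qed
  have mono: "i \<le> j \<Longrightarrow> rs i \<le> rs j" for i j
    by (rule lift_Suc_mono_le[of rs]) (use inc less_imp_le in auto)
  define ts where "ts = (LEAST t. c t \<in> G)"
  define Lr where "Lr = (LEAST i. ts \<le> rs i)"
  have early: "rs (Suc i) < ts" if "Suc i < Lr" for i
    using not_less_Least[of "Suc i" "\<lambda>i. ts \<le> rs i"] that unfolding Lr_def by simp
  have notG: "e i \<notin> G" if "Suc i < Lr" for i
  proof -
    have "te i < ts" using early[OF that] tspec[of i] by simp
    thus ?thesis using not_less_Least[of "te i" "\<lambda>t. c t \<in> G"] unfolding ts_def e_def by simp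
  qed
  have hasgood: "\<exists>\<delta>. good R (e i) \<delta>" if "Suc i < Lr" for i
  proof (rule ccontr)
    assume ng: "\<not> (\<exists>\<delta>. good R (e i) \<delta>)"
    obtain A where A: "0 < c (te i) A" using nz by blast
    have nG: "c (te i) \<notin> G" using notG[OF that] unfolding e_def .
    have ng': "\<not> (\<exists>\<delta>. good R (c (te i)) \<delta>)" using ng unfolding e_def .
    show False
      by (rule no_good_contra[where R=R and G=G and c=c and \<alpha>=\<alpha> and T="te i" and A=A,
            OF crn closed correct exec A nG ng'])
  qed
  have exit: "\<exists>x. te i \<le> x \<and> x \<le> rs (Suc i) \<and> c x \<notin> scc R (e i)" if "Suc i < Lr" for i
  proof -
    define \<delta> where "\<delta> = (SOME \<delta>. good R (e i) \<delta>)"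
    have rq: "rho R (e i) = {\<delta>}" and gd: "good R (e i) \<delta>" using rho_good[OF hasgood[OF that]] unfolding \<delta>_def by auto
    have gapp: "\<And>y. y \<in> scc R (e i) \<Longrightarrow> \<delta> \<in> app R y"
      and gout: "\<And>y. y \<in> scc R (e i) \<Longrightarrow> apply_r \<delta> y \<notin> scc R (e i)" using gd unfolding good_def by auto
    define s where "s = rs (Suc i)"
    have ts1: "te i < s" "\<alpha> (s - 1) = \<delta> \<or> {\<delta>} \<subseteq> (\<Union>t'\<in>{te i..s}. nonapp R (c t'))"
      using tspec[of i] rq unfolding s_def by auto
    show ?thesis
    proof (cases "\<alpha> (s - 1) = \<delta>")
      case True
      show ?thesis
      proof (cases "c (s - 1) \<in> scc R (e i)")
        case True
        have "c s = apply_r (\<alpha> (s - 1)) (c (s - 1))"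
          using exec ts1(1) unfolding execution_def by (metis Suc_diff_1 gr_implies_not0 not_gr0)
        hence "c s \<notin> scc R (e i)" using gout[OF True] \<open>\<alpha> (s - 1) = \<delta>\<close> by simp
        thus ?thesis using ts1(1) unfolding s_def by (intro exI[of _ "rs (Suc i)"]) simp
      next
        case False
        thus ?thesis using ts1(1) unfolding s_def by (intro exI[of _ "rs (Suc i) - 1"]) auto
      qed
    next
      case False
      hence "{\<delta>} \<subseteq> (\<Union>t'\<in>{te i..s}. nonapp R (c t'))" using ts1(2) by simp
      then obtain t' where t': "t' \<in> {te i..s}" "\<delta> \<in> nonapp R (c t')" by blast
      hence "\<delta> \<notin> app R (c t')" unfolding nonapp_def by simp
      hence "c t' \<notin> scc R (e i)" using gapp by blast
      thus ?thesis using t'(1) unfolding s_def by (intro exI[of _ t']) auto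
    qed
  qed
  have after: "c y \<notin> scc R (e i)" if hyp: "Suc i < Lr" "rs (Suc i) \<le> y" for i y
  proof
    assume yin: "c y \<in> scc R (e i)"
    obtain x where x: "te i \<le> x" "x \<le> rs (Suc i)" "c x \<notin> scc R (e i)" using exit[OF hyp(1)] by blast
    have r1: "reach R (e i) (c x)" unfolding e_def by (rule exec_reach_le[OF exec x(1)])
    have r2: "reach R (c x) (c y)" using x(2) hyp(2) by (intro exec_reach_le[OF exec]) simp
    have r3: "reach R (c y) (e i)" using yin unfolding scc_def by simp
    have "c x \<in> scc R (e i)" unfolding scc_def using r1 reach_trans[OF r2 r3] by simp
    thus False using x(3) by simp
  qed
  have neq: "e i \<noteq> e j" if "i < j" "Suc j < Lr" for i j
  proof -
    have si: "Suc i < Lr" using that by simp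
    have "rs (Suc i) \<le> rs j" using that(1) by (intro mono) simp
    hence "rs (Suc i) \<le> te j" using te_ge[of j] by simp
    hence "e j \<notin> scc R (e i)" using after[OF si] unfolding e_def by simp
    thus ?thesis using scc_self[of "e i" R] by auto
  qed
  define B where "B = {y::'s config. csize y \<le> K * csize (c 0)}"
  have inj: "inj_on e {..<Lr - 1}"
  proof (rule inj_onI)
    fix i j assume ij: "i \<in> {..<Lr - 1}" "j \<in> {..<Lr - 1}" "e i = e j"
    show "i = j"
    proof (rule ccontr)
      assume "i \<noteq> j"
      hence "i < j \<or> j < i" by arith
      thus False using neq ij by (metis lessThan_iff less_diff_conv Suc_eq_plus1)
    qed
  qed
  have sub: "e ` {..<Lr - 1} \<subseteq> B"
  proof
    fix y assume "y \<in> e ` {..<Lr - 1}"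
    then obtain i where "y = e i" by blast
    moreover have "reach R (c 0) (e i)" unfolding e_def by (rule exec_reach_le[OF exec]) simp
    ultimately show "y \<in> B" unfolding B_def using K sz by blast
  qed
  have "Lr - 1 = card (e ` {..<Lr - 1})" using card_image[OF inj] by simp
  also have "\<dots> \<le> card B"
  proof (rule card_mono)
    show "finite B" unfolding B_def by (rule finite_bounded)
  qed (rule sub)
  finally have "Lr \<le> card B + 1" by simp
  thus ?thesis unfolding Lr_def ts_def rs_def B_def .
qed

lemma main_gen:
  fixes R :: "'s::finite reaction set" and vol :: "nat \<Rightarrow> real" and Gf :: "'s config \<Rightarrow> 's config set"
  assumes crn: "crn R" and volpos: "\<And>n. 1 \<le> n \<Longrightarrow> 0 < vol n"
    and closed: "\<And>c0 y z. y \<in> Gf c0 \<Longrightarrow> reach R y z \<Longrightarrow> z \<in> Gf c0"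
    and correct: "\<And>c \<alpha>. valid \<mu> C (c 0) \<Longrightarrow> execution R c \<alpha> \<Longrightarrow> weakly_fair R c \<alpha> \<Longrightarrow> \<exists>t. c t \<in> Gf (c 0)"
  shows "\<exists>\<rho> (f :: nat \<Rightarrow> real). runtime_policy R \<rho> \<and> (\<forall>n\<ge>1. 0 \<le> f n) \<and>
     (\<forall>n\<ge>1. \<forall>c \<alpha> \<sigma>. (c, \<alpha>) \<in> Fset R \<mu> C n \<and> skipping_policy \<sigma> \<longrightarrow>
        prefix_runtime (vol n) R c \<alpha> \<rho> \<sigma> (LEAST t. c t \<in> Gf (c 0)) \<le> ennreal (f n))"
proof -
  obtain K where K: "\<forall>c c'. 1 \<le> csize c \<longrightarrow> reach R c c' \<longrightarrow> csize c' \<le> K * csize c"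
    using crn_density[OF crn] by blast
  define f where "f = (\<lambda>n. (real (card {y::'s config. csize y \<le> K * n}) + 1) * (1 / plow (vol n) R))"
  have f0: "\<forall>n\<ge>1. 0 \<le> f n"
  proof (intro allI impI)
    fix n :: nat assume "1 \<le> n"
    hence "0 < plow (vol n) R" using plow_pos[OF crn volpos] by blast
    thus "0 \<le> f n" unfolding f_def by simp
  qed
  have bound: "prefix_runtime (vol n) R c \<alpha> (rho R) \<sigma> (LEAST t. c t \<in> Gf (c 0)) \<le> ennreal (f n)"
    if n1: "1 \<le> n" and F: "(c, \<alpha>) \<in> Fset R \<mu> C n" and skip: "skipping_policy \<sigma>" for n c \<alpha> \<sigma>
  proof -
    have exec: "execution R c \<alpha>" and wf: "weakly_fair R c \<alpha>" and val: "valid \<mu> C (c 0)"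
      and cs: "csize (c 0) = n" using F unfolding Fset_def by auto
    have sz: "1 \<le> csize (c 0)" using cs n1 by simp
    have phi: "0 < vol n" by (rule volpos[OF n1])
    define G where "G = Gf (c 0)"
    have closedG: "\<And>y z. y \<in> G \<Longrightarrow> reach R y z \<Longrightarrow> z \<in> G" unfolding G_def by (rule closed)
    have correctG: "\<exists>t. c' t \<in> G" if "execution R c' \<alpha>'" "weakly_fair R c' \<alpha>'" "c' 0 = c 0" for c' \<alpha>'
      using correct[of c' \<alpha>'] that val unfolding G_def by simp
    define Lr where "Lr = (LEAST i. (LEAST t. c t \<in> G) \<le> round_start R c \<alpha> (rho R) \<sigma> i)"
    have Lr: "Lr \<le> card {y::'s config. csize y \<le> K * n} + 1"
      using rounds_main[OF crn closedG correctG exec wf sz skip K] unfolding Lr_def cs by simp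
    define q where "q = 1 / plow (vol n) R"
    have q0: "0 \<le> q" unfolding q_def using plow_pos[OF crn phi] by simp
    have TCb: "TC (vol n) R (rho R (eff_config R c \<alpha> (rho R) \<sigma> i)) (eff_config R c \<alpha> (rho R) \<sigma> i) \<le> ennreal q" for i
    proof -
      obtain A where A: "0 < eff_config R c \<alpha> (rho R) \<sigma> i A"
        using exec_nz[OF crn exec sz] unfolding eff_config_def by blast
      show ?thesis unfolding q_def by (rule TC_bound[of R "vol n" "rho R (eff_config R c \<alpha> (rho R) \<sigma> i)" "eff_config R c \<alpha> (rho R) \<sigma> i" A, OF crn phi rho_QC A])
    qed
    have "prefix_runtime (vol n) R c \<alpha> (rho R) \<sigma> (LEAST t. c t \<in> Gf (c 0)) =
        (\<Sum>i<Lr. TC (vol n) R (rho R (eff_config R c \<alpha> (rho R) \<sigma> i)) (eff_config R c \<alpha> (rho R) \<sigma> i))"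
      unfolding prefix_runtime_def Lr_def G_def ..
    also have "\<dots> \<le> of_nat (card {..<Lr}) * ennreal q"
      by (rule sum_bounded_above) (rule TCb)
    also have "\<dots> = ennreal (real Lr * q)" by (simp add: ennreal_of_nat_eq_real_of_nat ennreal_mult'' q0)
    also have "\<dots> \<le> ennreal (f n)"
    proof (rule ennreal_leI)
      have "real Lr \<le> real (card {y::'s config. csize y \<le> K * n}) + 1" using Lr by linarith
      thus "real Lr * q \<le> f n" unfolding f_def q_def[symmetric] using q0 by (rule mult_right_mono)
    qed
    finally show ?thesis .
  qed
  show ?thesis using rho_policy f0 bound by blast
qed

lemma stab_closed: "y \<in> stab R Z \<Longrightarrow> reach R y z \<Longrightarrow> z \<in> stab R Z"
  unfolding stab_def using reach_trans by blast

lemma halt_closed: "y \<in> halt R Z \<Longrightarrow> reach R y z \<Longrightarrow> z \<in> halt R Z"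
proof -
  assume a: "y \<in> halt R Z" "reach R y z"
  hence "z = y" unfolding halt_def by blast
  thus ?thesis using a(1) by simp
qed

theorem lemma4p2:
  fixes R :: "('s::finite) reaction set"
    and \<mu> :: "'s \<Rightarrow> 'u"
    and C :: "('u config \<times> 'u config) set"
    and vol :: "nat \<Rightarrow> real"
  assumes "crn R"
    and "\<exists>a b. 0 < a \<and> 0 < b \<and> (\<forall>n\<ge>1. a * real n \<le> vol n \<and> vol n \<le> b * real n)"
  shows "(stably_correct R \<mu> C \<longrightarrow>
           (\<exists>\<rho> (f :: nat \<Rightarrow> real). runtime_policy R \<rho> \<and> (\<forall>n\<ge>1. 0 \<le> f n) \<and>
              (\<forall>n\<ge>1. \<forall>c \<alpha> \<sigma>. (c, \<alpha>) \<in> Fset R \<mu> C n \<and> skipping_policy \<sigma> \<longrightarrow>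
                  RT_stab (vol n) R \<mu> C c \<alpha> \<rho> \<sigma> \<le> ennreal (f n))))
       \<and> (haltingly_correct R \<mu> C \<longrightarrow>
           (\<exists>\<rho> (f :: nat \<Rightarrow> real). runtime_policy R \<rho> \<and> (\<forall>n\<ge>1. 0 \<le> f n) \<and>
              (\<forall>n\<ge>1. \<forall>c \<alpha> \<sigma>. (c, \<alpha>) \<in> Fset R \<mu> C n \<and> skipping_policy \<sigma> \<longrightarrow>
                  RT_halt (vol n) R \<mu> C c \<alpha> \<rho> \<sigma> \<le> ennreal (f n))))"
proof -
  obtain a where a: "0 < a" "\<forall>n\<ge>1. a * real n \<le> vol n" using assms(2) by blast
  have volpos: "0 < vol n" if "1 \<le> n" for n
  proof -
    have "0 < a * real n" using a(1) that by simp
    also have "\<dots> \<le> vol n" using a(2) that by blast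
    finally show ?thesis .
  qed
  show ?thesis
  proof (intro conjI impI)
    assume sc: "stably_correct R \<mu> C"
    have corr: "\<exists>t. c t \<in> stab R (Zset \<mu> C (c 0))"
      if "valid \<mu> C (c 0)" "execution R c \<alpha>" "weakly_fair R c \<alpha>" for c \<alpha>
      using sc that unfolding stably_correct_def by blast
    show "\<exists>\<rho> (f :: nat \<Rightarrow> real). runtime_policy R \<rho> \<and> (\<forall>n\<ge>1. 0 \<le> f n) \<and>
              (\<forall>n\<ge>1. \<forall>c \<alpha> \<sigma>. (c, \<alpha>) \<in> Fset R \<mu> C n \<and> skipping_policy \<sigma> \<longrightarrow>
                  RT_stab (vol n) R \<mu> C c \<alpha> \<rho> \<sigma> \<le> ennreal (f n))"
      unfolding RT_stab_def stab_step_def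
      by (rule main_gen[where Gf = "\<lambda>c0. stab R (Zset \<mu> C c0)", OF assms(1) volpos stab_closed corr])
  next
    assume hc: "haltingly_correct R \<mu> C"
    have corr: "\<exists>t. c t \<in> halt R (Zset \<mu> C (c 0))"
      if "valid \<mu> C (c 0)" "execution R c \<alpha>" "weakly_fair R c \<alpha>" for c \<alpha>
      using hc that unfolding haltingly_correct_def by blast
    show "\<exists>\<rho> (f :: nat \<Rightarrow> real). runtime_policy R \<rho> \<and> (\<forall>n\<ge>1. 0 \<le> f n) \<and>
              (\<forall>n\<ge>1. \<forall>c \<alpha> \<sigma>. (c, \<alpha>) \<in> Fset R \<mu> C n \<and> skipping_policy \<sigma> \<longrightarrow>
                  RT_halt (vol n) R \<mu> C c \<alpha> \<rho> \<sigma> \<le> ennreal (f n))"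
      unfolding RT_halt_def halt_step_def
      by (rule main_gen[where Gf = "\<lambda>c0. halt R (Zset \<mu> C c0)", OF assms(1) volpos halt_closed corr])
  qed
qed

end
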